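(* Suppose all $x_i$, $r_i$ and $L$ are integers. Then there is an algorithm that computes a minimum-cost feasible order-preserving solution in $O(\textsc{opt}^2\, n)$ time, where $\textsc{opt}$ is the minimum cost of a feasible order-preserving solution.
   Context: Barrier coverage problem: an instance consists of $L>0$ and $n$ sensors with locations $x_i$ and radii $r_i$, indexed so that $x_1\le\cdots\le x_n$. A solution $y\in\mathbb{R}^n$ places sensor $i$ to cover $[y_i-r_i,y_i+r_i]$; it is feasible if these intervals cover $[0,L]$; its cost is $\sum_i|y_i-x_i|$. A set $S$ is active for $y$ if $\bigcup_{i\in S}[y_i-r_i,y_i+r_i]\supseteq[0,L]$. A solution $y$ is order-preserving if it has an active set $S$ such that for all $i,j\in S$ with $i<j$ we have $y_i<y_j$. *)

theory Defs
  imports Complex_Main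
begin

text \<open>Sensors are indexed 0..n-1 (the paper uses 1..n). A solution is a
function y :: nat => real; only the values at indices i < n matter.\<close>

definition active :: "real \<Rightarrow> (nat \<Rightarrow> real) \<Rightarrow> (nat \<Rightarrow> real) \<Rightarrow> nat set \<Rightarrow> bool" where
  "active L r y S \<longleftrightarrow> {0..L} \<subseteq> (\<Union>i\<in>S. {y i - r i .. y i + r i})"

definition feasible :: "nat \<Rightarrow> real \<Rightarrow> (nat \<Rightarrow> real) \<Rightarrow> (nat \<Rightarrow> real) \<Rightarrow> bool" where
  "feasible n L r y \<longleftrightarrow> active L r y {..<n}"

definition order_preserving :: "nat \<Rightarrow> real \<Rightarrow> (nat \<Rightarrow> real) \<Rightarrow> (nat \<Rightarrow> real) \<Rightarrow> bool" where
  "order_preserving n L r y \<longleftrightarrow>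
     (\<exists>S \<subseteq> {..<n}. active L r y S \<and> (\<forall>i\<in>S. \<forall>j\<in>S. i < j \<longrightarrow> y i < y j))"

definition cost :: "nat \<Rightarrow> (nat \<Rightarrow> real) \<Rightarrow> (nat \<Rightarrow> real) \<Rightarrow> real" where
  "cost n x y = (\<Sum>i<n. \<bar>y i - x i\<bar>)"

definition opt_op :: "nat \<Rightarrow> real \<Rightarrow> (nat \<Rightarrow> real) \<Rightarrow> (nat \<Rightarrow> real) \<Rightarrow> real" where
  "opt_op n L x r = Inf {cost n x y | y. feasible n L r y \<and> order_preserving n L r y}"

text \<open>Each executed
instruction costs one time unit. Arithmetic: addition and subtraction only
(no unit-cost multiplication), indirect addressing, conditional jumps.\<close>

datatype instr =
    Const int int
  | Add int int int
  | Sub int int int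
  | Load int int
  | Store int int
  | Jz int nat
  | Jneg int nat
  | Jmp nat
  | Halt

type_synonym mem = "int \<Rightarrow> int"
type_synonym config = "nat \<times> mem"

fun exec_instr :: "instr \<Rightarrow> config \<Rightarrow> config" where
  "exec_instr (Const a c) (pc, M) = (Suc pc, M(a := c))"
| "exec_instr (Add a b c) (pc, M) = (Suc pc, M(a := M b + M c))"
| "exec_instr (Sub a b c) (pc, M) = (Suc pc, M(a := M b - M c))"
| "exec_instr (Load a b) (pc, M) = (Suc pc, M(a := M (M b)))"
| "exec_instr (Store a b) (pc, M) = (Suc pc, M(M a := M b))"
| "exec_instr (Jz a l) (pc, M) = (if M a = 0 then l else Suc pc, M)"
| "exec_instr (Jneg a l) (pc, M) = (if M a < 0 then l else Suc pc, M)"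
| "exec_instr (Jmp l) (pc, M) = (l, M)"
| "exec_instr Halt (pc, M) = (pc, M)"

definition halted :: "instr list \<Rightarrow> config \<Rightarrow> bool" where
  "halted P c \<longleftrightarrow> fst c \<ge> length P \<or> P ! fst c = Halt"

definition step :: "instr list \<Rightarrow> config \<Rightarrow> config" where
  "step P c = (if halted P c then c else exec_instr (P ! fst c) c)"

definition halts_in :: "instr list \<Rightarrow> config \<Rightarrow> nat \<Rightarrow> config \<Rightarrow> bool" where
  "halts_in P c t c' \<longleftrightarrow> c' = (step P ^^ t) c \<and> halted P c'"

definition input_mem :: "nat \<Rightarrow> int \<Rightarrow> (nat \<Rightarrow> int) \<Rightarrow> (nat \<Rightarrow> int) \<Rightarrow> mem" where
  "input_mem n L x r = (\<lambda>a.
      if a = 0 then int n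
      else if a = 1 then L
      else if 2 \<le> a \<and> a < 2 + int n then x (nat (a - 2))
      else if 2 + int n \<le> a \<and> a < 2 + 2 * int n then r (nat (a - 2 - int n))
      else 0)"

definition output_sol :: "nat \<Rightarrow> mem \<Rightarrow> (nat \<Rightarrow> real)" where
  "output_sol n M = (\<lambda>i. real_of_int (M (2 + 2 * int n + int i)))"

end

theory Submission
  imports Defs "HOL-Analysis.Analysis"
begin


abbreviation ONE :: int where "ONE \<equiv> -1"
abbreviation SS :: int where "SS \<equiv> -2"
abbreviation CC :: int where "CC \<equiv> -3"
abbreviation COL :: int where "COL \<equiv> -4"
abbreviation IA :: int where "IA \<equiv> -5"
abbreviation XA :: int where "XA \<equiv> -6"
abbreviation RA :: int where "RA \<equiv> -7"
abbreviation CNT :: int where "CNT \<equiv> -8"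
abbreviation KR :: int where "KR \<equiv> -9"
abbreviation QR :: int where "QR \<equiv> -10"
abbreviation MX :: int where "MX \<equiv> -11"
abbreviation KK :: int where "KK \<equiv> -12"
abbreviation PV :: int where "PV \<equiv> -13"
abbreviation XV :: int where "XV \<equiv> -14"
abbreviation RV :: int where "RV \<equiv> -15"
abbreviation T1 :: int where "T1 \<equiv> -16"
abbreviation T2 :: int where "T2 \<equiv> -17"
abbreviation VV :: int where "VV \<equiv> -18"
abbreviation ZERO :: int where "ZERO \<equiv> -20"
abbreviation YA :: int where "YA \<equiv> -21"


definition prog :: "instr list" where
"prog = [
  Const ONE 1,
  Add SS 0 0,
  Add SS SS ONE,
  Add SS SS ONE,
  Add COL SS 0,
  Const CC 0,
  Const ZERO 0,
  \<comment> \<open>7: column head\<close>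
  Add IA COL ZERO,
  Const XA 2,
  Add RA XA 0,
  Add CNT 0 ZERO,
  \<comment> \<open>11: i-loop head\<close>
  Jz CNT 52,
  Const MX (-1),
  Const KK 0,
  Const KR 0,
  Add QR IA ZERO,
  Load XV XA,
  Load RV RA,
  \<comment> \<open>18: k-loop head\<close>
  Sub T1 CC KR,
  Jneg T1 43,
  Load PV QR,
  Add T1 PV RV,
  Sub T2 XV KR,
  Sub T2 T1 T2,
  Jneg T2 34,
  Add T2 XV KR,
  Sub VV T2 T1,
  Jneg VV 30,
  Add VV T1 RV,
  Jmp 31,
  \<comment> \<open>30\<close>
  Add VV T2 RV,
  \<comment> \<open>31\<close>
  Sub T2 VV PV,
  Jneg T2 34,
  Jmp 35,
  \<comment> \<open>34\<close>
  Add VV PV ZERO,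
  \<comment> \<open>35\<close>
  Sub T2 MX VV,
  Jneg T2 38,
  Jmp 40,
  \<comment> \<open>38\<close>
  Add MX VV ZERO,
  Add KK KR ZERO,
  \<comment> \<open>40\<close>
  Add KR KR ONE,
  Sub QR QR SS,
  Jmp 18,
  \<comment> \<open>43: k-loop end\<close>
  Add IA IA ONE,
  Add IA IA ONE,
  Store IA MX,
  Add T1 IA ONE,
  Store T1 KK,
  Add XA XA ONE,
  Add RA RA ONE,
  Sub CNT CNT ONE,
  Jmp 11,
  \<comment> \<open>52: check\<close>
  Load T1 IA,
  Sub T1 T1 1,
  Jneg T1 56,
  Jmp 59,
  \<comment> \<open>56\<close>
  Add CC CC ONE,
  Add COL COL SS,
  Jmp 7,
  \<comment> \<open>59: reconstruction\<close>
  Add CNT 0 ZERO,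
  Add YA RA 0,
  \<comment> \<open>61\<close>
  Jz CNT 90,
  Sub CNT CNT ONE,
  Sub XA XA ONE,
  Sub RA RA ONE,
  Sub YA YA ONE,
  Add T1 IA ONE,
  Load KR T1,
  Load XV XA,
  Load RV RA,
  Sub IA IA ONE,
  Sub IA IA ONE,
  Add T2 KR ZERO,
  \<comment> \<open>73\<close>
  Jz T2 77,
  Sub IA IA SS,
  Sub T2 T2 ONE,
  Jmp 73,
  \<comment> \<open>77\<close>
  Load PV IA,
  Add T1 PV RV,
  Sub VV XV KR,
  Sub VV T1 VV,
  Jneg VV 87,
  Add VV XV KR,
  Sub T2 VV T1,
  Jneg T2 88,
  Add VV T1 ZERO,
  Jmp 88,
  \<comment> \<open>87\<close>
  Add VV XV ZERO,
  \<comment> \<open>88\<close>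
  Store YA VV,
  Jmp 61,
  \<comment> \<open>90\<close>
  Halt]"

lemma len_prog: "length prog = 91" by (simp add: prog_def)

lemma prog_0[simp]: "prog ! 0 = Const ONE 1" by (simp add: prog_def)
lemma prog_1[simp]: "prog ! 1 = Add SS 0 0" by (simp add: prog_def)
lemma prog_2[simp]: "prog ! 2 = Add SS SS ONE" by (simp add: prog_def)
lemma prog_3[simp]: "prog ! 3 = Add SS SS ONE" by (simp add: prog_def)
lemma prog_4[simp]: "prog ! 4 = Add COL SS 0" by (simp add: prog_def)
lemma prog_5[simp]: "prog ! 5 = Const CC 0" by (simp add: prog_def)
lemma prog_6[simp]: "prog ! 6 = Const ZERO 0" by (simp add: prog_def)
lemma prog_7[simp]: "prog ! 7 = Add IA COL ZERO" by (simp add: prog_def)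
lemma prog_8[simp]: "prog ! 8 = Const XA 2" by (simp add: prog_def)
lemma prog_9[simp]: "prog ! 9 = Add RA XA 0" by (simp add: prog_def)
lemma prog_10[simp]: "prog ! 10 = Add CNT 0 ZERO" by (simp add: prog_def)
lemma prog_11[simp]: "prog ! 11 = Jz CNT 52" by (simp add: prog_def)
lemma prog_12[simp]: "prog ! 12 = Const MX (-1)" by (simp add: prog_def)
lemma prog_13[simp]: "prog ! 13 = Const KK 0" by (simp add: prog_def)
lemma prog_14[simp]: "prog ! 14 = Const KR 0" by (simp add: prog_def)
lemma prog_15[simp]: "prog ! 15 = Add QR IA ZERO" by (simp add: prog_def)
lemma prog_16[simp]: "prog ! 16 = Load XV XA" by (simp add: prog_def)
lemma prog_17[simp]: "prog ! 17 = Load RV RA" by (simp add: prog_def)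
lemma prog_18[simp]: "prog ! 18 = Sub T1 CC KR" by (simp add: prog_def)
lemma prog_19[simp]: "prog ! 19 = Jneg T1 43" by (simp add: prog_def)
lemma prog_20[simp]: "prog ! 20 = Load PV QR" by (simp add: prog_def)
lemma prog_21[simp]: "prog ! 21 = Add T1 PV RV" by (simp add: prog_def)
lemma prog_22[simp]: "prog ! 22 = Sub T2 XV KR" by (simp add: prog_def)
lemma prog_23[simp]: "prog ! 23 = Sub T2 T1 T2" by (simp add: prog_def)
lemma prog_24[simp]: "prog ! 24 = Jneg T2 34" by (simp add: prog_def)
lemma prog_25[simp]: "prog ! 25 = Add T2 XV KR" by (simp add: prog_def)
lemma prog_26[simp]: "prog ! 26 = Sub VV T2 T1" by (simp add: prog_def)
lemma prog_27[simp]: "prog ! 27 = Jneg VV 30" by (simp add: prog_def)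
lemma prog_28[simp]: "prog ! 28 = Add VV T1 RV" by (simp add: prog_def)
lemma prog_29[simp]: "prog ! 29 = Jmp 31" by (simp add: prog_def)
lemma prog_30[simp]: "prog ! 30 = Add VV T2 RV" by (simp add: prog_def)
lemma prog_31[simp]: "prog ! 31 = Sub T2 VV PV" by (simp add: prog_def)
lemma prog_32[simp]: "prog ! 32 = Jneg T2 34" by (simp add: prog_def)
lemma prog_33[simp]: "prog ! 33 = Jmp 35" by (simp add: prog_def)
lemma prog_34[simp]: "prog ! 34 = Add VV PV ZERO" by (simp add: prog_def)
lemma prog_35[simp]: "prog ! 35 = Sub T2 MX VV" by (simp add: prog_def)
lemma prog_36[simp]: "prog ! 36 = Jneg T2 38" by (simp add: prog_def)
lemma prog_37[simp]: "prog ! 37 = Jmp 40" by (simp add: prog_def)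
lemma prog_38[simp]: "prog ! 38 = Add MX VV ZERO" by (simp add: prog_def)
lemma prog_39[simp]: "prog ! 39 = Add KK KR ZERO" by (simp add: prog_def)
lemma prog_40[simp]: "prog ! 40 = Add KR KR ONE" by (simp add: prog_def)
lemma prog_41[simp]: "prog ! 41 = Sub QR QR SS" by (simp add: prog_def)
lemma prog_42[simp]: "prog ! 42 = Jmp 18" by (simp add: prog_def)
lemma prog_43[simp]: "prog ! 43 = Add IA IA ONE" by (simp add: prog_def)
lemma prog_44[simp]: "prog ! 44 = Add IA IA ONE" by (simp add: prog_def)
lemma prog_45[simp]: "prog ! 45 = Store IA MX" by (simp add: prog_def)
lemma prog_46[simp]: "prog ! 46 = Add T1 IA ONE" by (simp add: prog_def)
lemma prog_47[simp]: "prog ! 47 = Store T1 KK" by (simp add: prog_def)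
lemma prog_48[simp]: "prog ! 48 = Add XA XA ONE" by (simp add: prog_def)
lemma prog_49[simp]: "prog ! 49 = Add RA RA ONE" by (simp add: prog_def)
lemma prog_50[simp]: "prog ! 50 = Sub CNT CNT ONE" by (simp add: prog_def)
lemma prog_51[simp]: "prog ! 51 = Jmp 11" by (simp add: prog_def)
lemma prog_52[simp]: "prog ! 52 = Load T1 IA" by (simp add: prog_def)
lemma prog_53[simp]: "prog ! 53 = Sub T1 T1 1" by (simp add: prog_def)
lemma prog_54[simp]: "prog ! 54 = Jneg T1 56" by (simp add: prog_def)
lemma prog_55[simp]: "prog ! 55 = Jmp 59" by (simp add: prog_def)
lemma prog_56[simp]: "prog ! 56 = Add CC CC ONE" by (simp add: prog_def)
lemma prog_57[simp]: "prog ! 57 = Add COL COL SS" by (simp add: prog_def)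
lemma prog_58[simp]: "prog ! 58 = Jmp 7" by (simp add: prog_def)
lemma prog_59[simp]: "prog ! 59 = Add CNT 0 ZERO" by (simp add: prog_def)
lemma prog_60[simp]: "prog ! 60 = Add YA RA 0" by (simp add: prog_def)
lemma prog_61[simp]: "prog ! 61 = Jz CNT 90" by (simp add: prog_def)
lemma prog_62[simp]: "prog ! 62 = Sub CNT CNT ONE" by (simp add: prog_def)
lemma prog_63[simp]: "prog ! 63 = Sub XA XA ONE" by (simp add: prog_def)
lemma prog_64[simp]: "prog ! 64 = Sub RA RA ONE" by (simp add: prog_def)
lemma prog_65[simp]: "prog ! 65 = Sub YA YA ONE" by (simp add: prog_def)
lemma prog_66[simp]: "prog ! 66 = Add T1 IA ONE" by (simp add: prog_def)
lemma prog_67[simp]: "prog ! 67 = Load KR T1" by (simp add: prog_def)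
lemma prog_68[simp]: "prog ! 68 = Load XV XA" by (simp add: prog_def)
lemma prog_69[simp]: "prog ! 69 = Load RV RA" by (simp add: prog_def)
lemma prog_70[simp]: "prog ! 70 = Sub IA IA ONE" by (simp add: prog_def)
lemma prog_71[simp]: "prog ! 71 = Sub IA IA ONE" by (simp add: prog_def)
lemma prog_72[simp]: "prog ! 72 = Add T2 KR ZERO" by (simp add: prog_def)
lemma prog_73[simp]: "prog ! 73 = Jz T2 77" by (simp add: prog_def)
lemma prog_74[simp]: "prog ! 74 = Sub IA IA SS" by (simp add: prog_def)
lemma prog_75[simp]: "prog ! 75 = Sub T2 T2 ONE" by (simp add: prog_def)
lemma prog_76[simp]: "prog ! 76 = Jmp 73" by (simp add: prog_def)
lemma prog_77[simp]: "prog ! 77 = Load PV IA" by (simp add: prog_def)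
lemma prog_78[simp]: "prog ! 78 = Add T1 PV RV" by (simp add: prog_def)
lemma prog_79[simp]: "prog ! 79 = Sub VV XV KR" by (simp add: prog_def)
lemma prog_80[simp]: "prog ! 80 = Sub VV T1 VV" by (simp add: prog_def)
lemma prog_81[simp]: "prog ! 81 = Jneg VV 87" by (simp add: prog_def)
lemma prog_82[simp]: "prog ! 82 = Add VV XV KR" by (simp add: prog_def)
lemma prog_83[simp]: "prog ! 83 = Sub T2 VV T1" by (simp add: prog_def)
lemma prog_84[simp]: "prog ! 84 = Jneg T2 88" by (simp add: prog_def)
lemma prog_85[simp]: "prog ! 85 = Add VV T1 ZERO" by (simp add: prog_def)
lemma prog_86[simp]: "prog ! 86 = Jmp 88" by (simp add: prog_def)
lemma prog_87[simp]: "prog ! 87 = Add VV XV ZERO" by (simp add: prog_def)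
lemma prog_88[simp]: "prog ! 88 = Store YA VV" by (simp add: prog_def)
lemma prog_89[simp]: "prog ! 89 = Jmp 61" by (simp add: prog_def)
lemma prog_90[simp]: "prog ! 90 = Halt" by (simp add: prog_def)

definition wpp :: "nat \<Rightarrow> (mem \<Rightarrow> bool) \<Rightarrow> config \<Rightarrow> nat \<Rightarrow> bool" where
  "wpp tgt R s b \<longleftrightarrow> (\<exists>t\<le>b. fst ((step prog ^^ t) s) = tgt \<and> R (snd ((step prog ^^ t) s)))"

lemma wp_done: "R M \<Longrightarrow> wpp tgt R (tgt, M) b"
  unfolding wpp_def by (intro exI[of _ 0]) auto

lemma wp_step: "pc < 91 \<Longrightarrow> prog ! pc \<noteq> Halt \<Longrightarrow> wpp tgt R (exec_instr (prog ! pc) (pc, M)) b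
   \<Longrightarrow> wpp tgt R (pc, M) (Suc b)"
  unfolding wpp_def
  apply clarify
  subgoal for t by (rule exI[of _ "Suc t"]) (simp add: funpow_Suc_right step_def halted_def len_prog del: funpow.simps)
  done

lemma wp_stepn: "pc < 91 \<Longrightarrow> prog ! pc \<noteq> Halt \<Longrightarrow> 0 < b \<Longrightarrow> wpp tgt R (exec_instr (prog ! pc) (pc, M)) (b - 1)
   \<Longrightarrow> wpp tgt R (pc, M) b"
  using wp_step[of pc tgt R M "b - 1"] by simp

lemma wp_mono: "wpp tgt R s b \<Longrightarrow> b \<le> b' \<Longrightarrow> (\<And>M. R M \<Longrightarrow> R' M) \<Longrightarrow> wpp tgt R' s b'"
  unfolding wpp_def using le_trans by blast

lemma wp_seq: "wpp t1 R s b1 \<Longrightarrow> (\<And>M. R M \<Longrightarrow> wpp t2 R' (t1, M) b2) \<Longrightarrow> wpp t2 R' s (b1 + b2)"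
proof -
  assume 1: "wpp t1 R s b1" and 2: "\<And>M. R M \<Longrightarrow> wpp t2 R' (t1, M) b2"
  from 1 obtain t where t: "t \<le> b1" "fst ((step prog ^^ t) s) = t1" "R (snd ((step prog ^^ t) s))"
    unfolding wpp_def by blast
  have e: "(step prog ^^ t) s = (t1, snd ((step prog ^^ t) s))" using t(2) by (simp add: prod_eq_iff)
  from 2[OF t(3)] obtain t' where t': "t' \<le> b2" "fst ((step prog ^^ t') (t1, snd ((step prog ^^ t) s))) = t2"
     "R' (snd ((step prog ^^ t') (t1, snd ((step prog ^^ t) s))))"
    unfolding wpp_def by blast
  show ?thesis unfolding wpp_def
    apply (rule exI[of _ "t' + t"])
    using t t' e by (simp add: funpow_add)
qed


definition bestv :: "int \<Rightarrow> int \<Rightarrow> int \<Rightarrow> int \<Rightarrow> int" where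
  "bestv p k xv rv = (if p + rv - (xv - k) < 0 then p else max p (min (xv + k) (p + rv) + rv))"

definition besty :: "int \<Rightarrow> int \<Rightarrow> int \<Rightarrow> int \<Rightarrow> int" where
  "besty p k xv rv = (if p + rv - (xv - k) < 0 then xv else min (xv + k) (p + rv))"

fun kl :: "(nat \<Rightarrow> int) \<Rightarrow> nat \<Rightarrow> int \<times> nat" where
  "kl f 0 = (-1, 0)"
| "kl f (Suc k) = (if fst (kl f k) - f k < 0 then (f k, k) else kl f k)"

lemma kl_ge: "(\<forall>k<K. f k \<ge> 0) \<Longrightarrow> j < K \<Longrightarrow> f j \<le> fst (kl f K)"
  by (induction K) (auto simp: less_Suc_eq)

lemma kl_ge0: "fst (kl f K) \<ge> -1"
  by (induction K) auto

lemma kl_attain: "(\<forall>k<K. f k \<ge> 0) \<Longrightarrow> 0 < K \<Longrightarrow> f (snd (kl f K)) = fst (kl f K) \<and> snd (kl f K) < K"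
proof (induction K)
  case 0 then show ?case by simp
next
  case (Suc K)
  show ?case
  proof (cases "K = 0")
    case True with Suc show ?thesis by simp
  next
    case False with Suc show ?thesis by auto
  qed
qed

lemma kl_nonneg: "(\<forall>k<K. f k \<ge> 0) \<Longrightarrow> 0 < K \<Longrightarrow> fst (kl f K) \<ge> 0"
  using kl_ge[of K f 0] by auto

fun Tab :: "(nat \<Rightarrow> int) \<Rightarrow> (nat \<Rightarrow> int) \<Rightarrow> nat \<Rightarrow> nat \<Rightarrow> int" where
  "Tab x r 0 c = 0"
| "Tab x r (Suc i) c = fst (kl (\<lambda>k. bestv (Tab x r i (c - k)) (int k) (x i) (r i)) (Suc c))"

definition Ktab :: "(nat \<Rightarrow> int) \<Rightarrow> (nat \<Rightarrow> int) \<Rightarrow> nat \<Rightarrow> nat \<Rightarrow> nat" where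
  "Ktab x r i c = snd (kl (\<lambda>k. bestv (Tab x r (i - 1) (c - k)) (int k) (x (i - 1)) (r (i - 1))) (Suc c))"

lemma bestv_ge: "bestv p k xv rv \<ge> p" by (simp add: bestv_def)

lemma Tab_nonneg: "Tab x r i c \<ge> 0"
proof (induction i arbitrary: c)
  case 0 then show ?case by simp
next
  case (Suc i)
  have "\<forall>k<Suc c. bestv (Tab x r i (c - k)) (int k) (x i) (r i) \<ge> 0"
    using Suc bestv_ge order_trans by blast
  then show ?case by (simp only: Tab.simps) (rule kl_nonneg, auto)
qed

lemma Ktab_props: "Ktab x r (Suc i) c \<le> c \<and>
   bestv (Tab x r i (c - Ktab x r (Suc i) c)) (int (Ktab x r (Suc i) c)) (x i) (r i) = Tab x r (Suc i) c"
proof -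
  have "\<forall>k<Suc c. bestv (Tab x r i (c - k)) (int k) (x i) (r i) \<ge> 0"
    using Tab_nonneg bestv_ge order_trans by blast
  from kl_attain[OF this] show ?thesis unfolding Ktab_def by simp
qed

lemma Tab_ge: "k \<le> c \<Longrightarrow> bestv (Tab x r i (c - k)) (int k) (x i) (r i) \<le> Tab x r (Suc i) c"
proof -
  assume "k \<le> c"
  have "\<forall>k<Suc c. bestv (Tab x r i (c - k)) (int k) (x i) (r i) \<ge> 0"
    using Tab_nonneg bestv_ge order_trans by blast
  from kl_ge[OF this, of k] \<open>k \<le> c\<close> show ?thesis by simp
qed


locale inst =
  fixes n :: nat and L :: int and x r :: "nat \<Rightarrow> int"
begin

definition "N = int n"
definition "Sd = 2 * N + 2"
definition "Tb = 3 * N + 2"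
definition addrT :: "nat \<Rightarrow> nat \<Rightarrow> int" where "addrT c j = Tb + int c * Sd + 2 * int j"

definition memok :: "mem \<Rightarrow> nat \<Rightarrow> nat \<Rightarrow> bool" where
  "memok M c i \<longleftrightarrow>
    (\<forall>a. 0 \<le> a \<and> a < Tb \<longrightarrow> M a = input_mem n L x r a) \<and>
    (\<forall>c' j. 1 \<le> j \<and> j \<le> n \<and> (c' < c \<or> c' = c \<and> j \<le> i) \<longrightarrow>
        M (addrT c' j) = Tab x r j c' \<and> M (addrT c' j + 1) = int (Ktab x r j c')) \<and>
    (\<forall>c'\<le>c. M (addrT c' 0) = 0) \<and>
    (\<forall>a. addrT c i + 2 \<le> a \<longrightarrow> M a = 0)"

lemma N_nonneg[simp]: "0 \<le> N" by (simp add: N_def)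

lemma nonneg_neq1: "0 \<le> (a::int) \<Longrightarrow> (a = - 1) \<longleftrightarrow> False" by auto

lemma nonneg_neq: "0 \<le> (a::int) \<Longrightarrow> (a = - numeral w) \<longleftrightarrow> False"
proof -
  assume "0 \<le> a"
  moreover have "- numeral w < (0::int)" by simp
  ultimately have "a \<noteq> - numeral w" by linarith
  then show ?thesis by simp
qed


lemma Tb_pos: "Tb > 0" by (simp add: Tb_def N_def)

lemma addrT_pos: "addrT c j > 0" unfolding addrT_def Sd_def N_def Tb_def
  by (smt (verit) of_nat_0_le_iff mult_nonneg_nonneg)

lemma addrT_nonneg[simp]: "0 \<le> addrT c j" using addrT_pos[of c j] by simp

lemma nonneg_neq2a: "0 \<le> (a::int) \<Longrightarrow> (numeral w + a = 0) \<longleftrightarrow> False"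
proof -
  assume "0 \<le> a"
  moreover have "0 < (numeral w::int)" by simp
  ultimately have "numeral w + a \<noteq> 0" by linarith
  then show ?thesis by simp
qed

lemma nonneg_neq2b: "0 \<le> (a::int) \<Longrightarrow> (a + numeral w = 0) \<longleftrightarrow> False"
  using nonneg_neq2a[of a w] by (simp add: add.commute)

lemma nonneg_neq2c: "0 \<le> (a::int) \<Longrightarrow> (1 + a = 0) \<longleftrightarrow> False" "0 \<le> (a::int) \<Longrightarrow> (a + 1 = 0) \<longleftrightarrow> False"
  by auto

lemmas nonneg_neq2 = nonneg_neq2a nonneg_neq2b nonneg_neq2c
lemmas adr = nonneg_neq nonneg_neq1 nonneg_neq2

lemma addrT_neq[simp]: "addrT c j = - numeral w \<longleftrightarrow> False"
proof -
  have "- numeral w < (0::int)" by simp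
  then have "addrT c j \<noteq> - numeral w" using addrT_pos[of c j] by linarith
  then show ?thesis by simp
qed

lemma addrT_neq2[simp]: "- numeral w = addrT c j \<longleftrightarrow> False"
  using addrT_neq[of c j w] by metis

lemma addrT_neq3[simp]: "- 1 = addrT c j \<longleftrightarrow> False" "addrT c j = - 1 \<longleftrightarrow> False"
  using addrT_pos[of c j] by auto

lemma memok_upd: "a < 0 \<Longrightarrow> memok M c i \<Longrightarrow> memok (M(a := v)) c i"
proof -
  assume a: "a < 0" "memok M c i"
  have "\<forall>c j. a \<noteq> addrT c j \<and> a \<noteq> addrT c j + 1" using addrT_pos a(1)
    by (metis add.commute add_nonneg_nonneg le_add_same_cancel2 le_less linorder_not_le zero_le_one)
  moreover have "a < addrT c i + 2" using addrT_pos[of c i] a(1) by simp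
  ultimately show ?thesis using a unfolding memok_def by auto
qed

definition fk :: "nat \<Rightarrow> nat \<Rightarrow> nat \<Rightarrow> int" where
  "fk c i k = bestv (Tab x r i (c - k)) (int k) (x i) (r i)"

definition kinv :: "mem \<Rightarrow> nat \<Rightarrow> nat \<Rightarrow> nat \<Rightarrow> bool" where
  "kinv M c i k \<longleftrightarrow> M ONE = 1 \<and> M SS = Sd \<and> M CC = int c \<and> M COL = addrT c 0 \<and> M ZERO = 0 \<and>
     M IA = addrT c i \<and> M XA = 2 + int i \<and> M RA = 2 + N + int i \<and> M CNT = N - int i \<and>
     memok M c i \<and> M KR = int k \<and> M QR = addrT c i - int k * Sd \<and> M XV = x i \<and> M RV = r i \<and>
     M MX = fst (kl (fk c i) k) \<and> M KK = int (snd (kl (fk c i) k))"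

lemma addrT_shift: "k \<le> c \<Longrightarrow> addrT c i - int k * Sd = addrT (c - k) i"
  unfolding addrT_def by (simp add: of_nat_diff algebra_simps)

lemma addrT_shift2: "k \<le> c \<Longrightarrow> Sd * int k + addrT (c - k) i = addrT c i"
  unfolding addrT_def by (simp add: of_nat_diff algebra_simps)

lemma addrT_shift3: "k \<le> c \<Longrightarrow> addrT (c - k) i - Sd = addrT c i - (1 + int k) * Sd"
  unfolding addrT_def by (simp add: of_nat_diff algebra_simps)

lemma memok_read: "memok M c i \<Longrightarrow> k \<le> c \<Longrightarrow> i \<le> n \<Longrightarrow> M (addrT (c - k) i) = Tab x r i (c - k)"
  unfolding memok_def
  apply (cases "i = 0")
   apply simp
  apply (cases "k = 0")
   apply force
  apply (elim conjE)
  apply (drule spec[of _ "c - k"], drule spec[of _ i])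
  by auto

lemma kbody:
  assumes inv: "kinv M c i k" and kc: "k \<le> c" and iN: "i < n"
  shows "wpp 18 (\<lambda>M'. kinv M' c i (Suc k)) (18, M) 25"
proof -
  have rd: "M (addrT (c - k) i) = Tab x r i (c - k)"
    using inv kc iN by (simp add: kinv_def memok_read)
  have kc': "\<not> (int c - int k < 0)" "\<not> c < k" using kc by auto
  from inv have f: "M ONE = 1" "M SS = Sd" "M CC = int c" "M COL = addrT c 0" "M ZERO = 0"
    "M IA = addrT c i" "M XA = 2 + int i" "M RA = 2 + N + int i" "M CNT = N - int i"
    "memok M c i" "M KR = int k" "M QR = addrT (c - k) i" "M XV = x i" "M RV = r i"
     "M MX = fst (kl (fk c i) k)" "M KK = int (snd (kl (fk c i) k))"
    unfolding kinv_def by (auto simp: addrT_shift kc)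
  show ?thesis
    apply (rule wp_stepn, simp, simp, simp, simp add: f rd kc kc' split: if_split)
    apply ((rule wp_done, simp add: kinv_def f memok_upd fk_def bestv_def addrT_shift3 kc) | rule conjI | rule impI | (rule wp_stepn, simp, simp, simp, simp add: f rd kc' split: if_split))+
    done
qed


lemma kexit:
  assumes inv: "kinv M c i (Suc c)"
  shows "wpp 43 (\<lambda>M'. kinv M' c i (Suc c)) (18, M) 2"
proof -
  from inv have f: "M CC = int c" "M KR = int (Suc c)" unfolding kinv_def by auto
  show ?thesis
    apply ((rule wp_done, force simp: kinv_def inv[unfolded kinv_def] memok_upd) | rule conjI | rule impI | (rule wp_stepn, simp, simp, simp, simp add: f split: if_split))+
    done
qed

lemma kloop: "kinv M c i k \<Longrightarrow> k \<le> Suc c \<Longrightarrow> i < n \<Longrightarrow>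
   wpp 43 (\<lambda>M'. kinv M' c i (Suc c)) (18, M) (25 * (Suc c - k) + 2)"
proof (induction "Suc c - k" arbitrary: k M)
  case 0
  then have k: "k = Suc c" by simp
  have "25 * (Suc c - k) + 2 = 2" using k by simp
  then show ?case using kexit[of M c i] 0(2) k by (simp add: eval_nat_numeral)
next
  case (Suc d)
  then have kc: "k \<le> c" by simp
  have "wpp 43 (\<lambda>M'. kinv M' c i (Suc c)) (18, M) (25 + (25 * (Suc c - Suc k) + 2))"
    apply (rule wp_seq[OF kbody[OF Suc.prems(1) kc Suc.prems(3)]])
    apply (rule Suc.hyps)
    using Suc.hyps(2) Suc.prems by auto
  moreover have "25 * (Suc c - k) + 2 = 25 + (25 * (Suc c - Suc k) + 2)" using kc by simp
  ultimately show ?case by (simp only:)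
qed

definition rowinv :: "mem \<Rightarrow> nat \<Rightarrow> nat \<Rightarrow> bool" where
  "rowinv M c i \<longleftrightarrow> M ONE = 1 \<and> M SS = Sd \<and> M CC = int c \<and> M COL = addrT c 0 \<and> M ZERO = 0 \<and>
     M IA = addrT c i \<and> M XA = 2 + int i \<and> M RA = 2 + N + int i \<and> M CNT = N - int i \<and>
     memok M c i"

lemma inp_x: "i < n \<Longrightarrow> input_mem n L x r (2 + int i) = x i"
  unfolding input_mem_def by simp

lemma inp_r: "i < n \<Longrightarrow> input_mem n L x r (2 + N + int i) = r i"
  unfolding input_mem_def N_def by simp

lemma memok_inp: "memok M c i \<Longrightarrow> 0 \<le> a \<Longrightarrow> a < Tb \<Longrightarrow> M a = input_mem n L x r a"
  unfolding memok_def by blast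

lemma row_to_k:
  assumes inv: "rowinv M c i" and iN: "i < n"
  shows "wpp 18 (\<lambda>M'. kinv M' c i 0) (11, M) 7"
proof -
  from inv have f: "M ONE = 1" "M SS = Sd" "M CC = int c" "M COL = addrT c 0" "M ZERO = 0"
    "M IA = addrT c i" "M XA = 2 + int i" "M RA = 2 + N + int i" "M CNT = N - int i"
    "memok M c i" unfolding rowinv_def by auto
  define xa where "xa = 2 + int i"
  define ra where "ra = 2 + N + int i"
  have xr: "M xa = x i" "M ra = r i" "0 \<le> xa" "0 \<le> ra" "M XA = xa" "M RA = ra"
    using memok_inp[OF f(10)] inp_x inp_r iN f by (auto simp: Tb_def N_def xa_def ra_def)
  have cnt: "N - int i \<noteq> 0" "N \<noteq> int i" using iN by (auto simp add: N_def)
  show ?thesis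
    apply ((rule wp_done, force simp: kinv_def f memok_upd xr xa_def ra_def) | rule conjI | rule impI | (rule wp_stepn, simp, simp, simp, simp add: f(1-6,9,10) xr cnt nonneg_neq nonneg_neq1 nonneg_neq2 split: if_split))+
    done
qed

lemma addrT_Suc: "addrT c i + 2 = addrT c (Suc i)"
  unfolding addrT_def by simp

lemma addrT_inj: "j1 \<le> n \<Longrightarrow> j2 \<le> n \<Longrightarrow> e1 \<in> {0,1} \<Longrightarrow> e2 \<in> {0,1} \<Longrightarrow>
   addrT c1 j1 + e1 = addrT c2 j2 + e2 \<Longrightarrow> c1 = c2 \<and> j1 = j2 \<and> e1 = e2"
proof -
  assume a: "j1 \<le> n" "j2 \<le> n" "e1 \<in> {0,1}" "e2 \<in> {0,1}" "addrT c1 j1 + e1 = addrT c2 j2 + e2"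
  let ?u1 = "2 * int j1 + e1" and ?u2 = "2 * int j2 + e2"
  have b: "0 \<le> ?u1" "?u1 < Sd" "0 \<le> ?u2" "?u2 < Sd" using a by (auto simp: Sd_def N_def)
  have e: "int c1 * Sd + ?u1 = int c2 * Sd + ?u2" using a(5) unfolding addrT_def by simp
  have "(int c1 * Sd + ?u1) div Sd = int c1" "(int c2 * Sd + ?u2) div Sd = int c2"
    using b by (simp_all add: add.commute)
  then have "int c1 = int c2" using e by simp
  then have "c1 = c2" by simp
  with e have u: "?u1 = ?u2" by simp
  have "e1 = ?u1 mod 2" "e2 = ?u2 mod 2" using a(3,4) by auto
  then have "e1 = e2" using u by simp
  then show ?thesis using a `c1 = c2` u by auto
qed

lemma addrT_lt: "j \<le> n \<Longrightarrow> (c1 < c2 \<or> c1 = c2 \<and> j1 < j2) \<Longrightarrow> j1 \<le> n \<Longrightarrow> addrT c1 j1 + 1 < addrT c2 j2"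
proof -
  assume a: "j \<le> n" "c1 < c2 \<or> c1 = c2 \<and> j1 < j2" "j1 \<le> n"
  show ?thesis
  proof (cases "c1 < c2")
    case True
    then have "int c1 + 1 \<le> int c2" by simp
    then have "(int c1 + 1) * Sd \<le> int c2 * Sd" by (rule mult_right_mono) (simp add: Sd_def N_def)
    then have "int c1 * Sd + Sd \<le> int c2 * Sd" by (simp add: algebra_simps)
    then show ?thesis using a(3) unfolding addrT_def Sd_def N_def by simp
  next
    case False
    then show ?thesis using a unfolding addrT_def by simp
  qed
qed


lemma addrT_ge: "Tb \<le> addrT c j"
  unfolding addrT_def Sd_def N_def by simp

lemma memok_store:
  assumes m: "memok M c i" and iN: "i < n" and neg: "a < 0"
  shows "memok (M(addrT c (Suc i) := Tab x r (Suc i) c, a := u, addrT c (Suc i) + 1 := int (Ktab x r (Suc i) c))) c (Suc i)"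
proof -
  let ?A = "addrT c (Suc i)"
  have na: "a \<noteq> ?A" "a \<noteq> ?A + 1" using neg addrT_pos[of c "Suc i"] by auto
  have M1: "(M(?A := v, a := u, ?A + 1 := w)) ?A = v" for v w using na by simp
  have M2: "(M(?A := v, a := u, ?A + 1 := w)) (?A + 1) = w" for v w by simp
  have M3: "b \<noteq> ?A \<Longrightarrow> b \<noteq> ?A + 1 \<Longrightarrow> b \<noteq> a \<Longrightarrow> (M(?A := v, a := u, ?A + 1 := w)) b = M b" for b v w by simp
  have A: "\<forall>b. 0 \<le> b \<and> b < Tb \<longrightarrow> (M(?A := Tab x r (Suc i) c, a := u, ?A + 1 := int (Ktab x r (Suc i) c))) b = input_mem n L x r b"
    using m addrT_ge[of c "Suc i"] neg unfolding memok_def by auto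
  have B: "\<forall>c' j. 1 \<le> j \<and> j \<le> n \<and> (c' < c \<or> c' = c \<and> j \<le> Suc i) \<longrightarrow>
        (M(?A := Tab x r (Suc i) c, a := u, ?A + 1 := int (Ktab x r (Suc i) c))) (addrT c' j) = Tab x r j c' \<and>
        (M(?A := Tab x r (Suc i) c, a := u, ?A + 1 := int (Ktab x r (Suc i) c))) (addrT c' j + 1) = int (Ktab x r j c')"
  proof (intro allI impI)
    fix c' j assume h: "1 \<le> j \<and> j \<le> n \<and> (c' < c \<or> c' = c \<and> j \<le> Suc i)"
    show "(M(?A := Tab x r (Suc i) c, a := u, ?A + 1 := int (Ktab x r (Suc i) c))) (addrT c' j) = Tab x r j c' \<and>
        (M(?A := Tab x r (Suc i) c, a := u, ?A + 1 := int (Ktab x r (Suc i) c))) (addrT c' j + 1) = int (Ktab x r j c')"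
    proof (cases "c' = c \<and> j = Suc i")
      case True then show ?thesis using M1 M2 by simp
    next
      case False
      have d1: "addrT c' j \<noteq> ?A" "addrT c' j \<noteq> ?A + 1" "addrT c' j + 1 \<noteq> ?A" "addrT c' j + 1 \<noteq> ?A + 1"
        using addrT_inj[of j "Suc i" 0 0 c' c] addrT_inj[of j "Suc i" 0 1 c' c]
              addrT_inj[of j "Suc i" 1 0 c' c] addrT_inj[of j "Suc i" 1 1 c' c] h iN False by auto
      have d2: "addrT c' j \<noteq> a" "addrT c' j + 1 \<noteq> a" using neg addrT_pos[of c' j] by auto
      have "j \<le> i \<or> c' < c" using h False by auto
      then have "M (addrT c' j) = Tab x r j c' \<and> M (addrT c' j + 1) = int (Ktab x r j c')"
        using m h unfolding memok_def by auto
      then show ?thesis using M3 d1 d2 by simp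
    qed
  qed
  have C: "\<forall>c'\<le>c. (M(?A := Tab x r (Suc i) c, a := u, ?A + 1 := int (Ktab x r (Suc i) c))) (addrT c' 0) = 0"
  proof (intro allI impI)
    fix c' assume "c' \<le> c"
    have d1: "addrT c' 0 \<noteq> ?A" "addrT c' 0 \<noteq> ?A + 1"
      using addrT_inj[of 0 "Suc i" 0 0 c' c] addrT_inj[of 0 "Suc i" 0 1 c' c] iN by auto
    have d2: "addrT c' 0 \<noteq> a" using neg addrT_pos[of c' 0] by auto
    show "(M(?A := Tab x r (Suc i) c, a := u, ?A + 1 := int (Ktab x r (Suc i) c))) (addrT c' 0) = 0"
      using M3 d1 d2 m `c' \<le> c` unfolding memok_def by simp
  qed
  have D: "\<forall>b. addrT c (Suc i) + 2 \<le> b \<longrightarrow> (M(?A := Tab x r (Suc i) c, a := u, ?A + 1 := int (Ktab x r (Suc i) c))) b = 0"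
    using m neg addrT_pos[of c "Suc i"] unfolding memok_def addrT_Suc[symmetric] by auto
  show ?thesis using A B C D unfolding memok_def by blast
qed

lemma k_to_row:
  assumes inv: "kinv M c i (Suc c)" and iN: "i < n"
  shows "wpp 11 (\<lambda>M'. rowinv M' c (Suc i)) (43, M) 9"
proof -
  from inv have f: "M ONE = 1" "M SS = Sd" "M CC = int c" "M COL = addrT c 0" "M ZERO = 0"
    "M IA = addrT c i" "M XA = 2 + int i" "M RA = 2 + N + int i" "M CNT = N - int i"
    "memok M c i" "M MX = Tab x r (Suc i) c" "M KK = int (Ktab x r (Suc i) c)"
    unfolding kinv_def fk_def Ktab_def by auto
  define tv where "tv = Tab x r (Suc i) c"
  define kv where "kv = int (Ktab x r (Suc i) c)"
  have f2: "M MX = tv" "M KK = kv" using f by (simp_all add: tv_def kv_def)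
  have mk: "memok (M(IA := addrT c (Suc i), addrT c (Suc i) := tv,
           T1 := addrT c (Suc i) + 1, addrT c (Suc i) + 1 := kv,
           XA := v1, RA := v2, CNT := v3)) c (Suc i)" for v1 v2 v3
    unfolding tv_def kv_def
    by (intro memok_upd memok_store iN f(10)) auto
  have a2: "addrT c i + 1 + 1 = addrT c (Suc i)" "addrT c i + 2 = addrT c (Suc i)" "2 + addrT c i = addrT c (Suc i)"
    using addrT_Suc[of c i] by auto
  show ?thesis
    apply ((rule wp_done, simp add: rowinv_def f(1-10) adr mk) | rule conjI | rule impI | (rule wp_stepn, simp, simp, simp, simp add: f(1-10) f2 a2 nonneg_neq2 split: if_split))+
    done
qed


lemma row_body:
  assumes inv: "rowinv M c i" and iN: "i < n"
  shows "wpp 11 (\<lambda>M'. rowinv M' c (Suc i)) (11, M) (7 + (25 * Suc c + 2) + 9)"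
  apply (rule wp_seq[OF wp_seq[OF row_to_k[OF inv iN]]])
   apply (drule kloop[where k = 0]; simp add: iN)
  apply (erule k_to_row[OF _ iN])
  done

lemma row_exit:
  assumes inv: "rowinv M c n"
  shows "wpp 52 (\<lambda>M'. rowinv M' c n) (11, M) 1"
proof -
  have z: "M CNT = 0" using inv unfolding rowinv_def N_def by simp
  show ?thesis
    apply ((rule wp_done, simp add: inv) | rule conjI | rule impI | (rule wp_stepn, simp, simp, simp, simp add: z split: if_split))+
    done
qed

lemma row_loop: "rowinv M c i \<Longrightarrow> i \<le> n \<Longrightarrow>
   wpp 52 (\<lambda>M'. rowinv M' c n) (11, M) ((n - i) * (25 * c + 43) + 1)"
proof (induction "n - i" arbitrary: i M)
  case 0
  then have "i = n" by simp
  then show ?case using row_exit 0 by simp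
next
  case (Suc d)
  then have iN: "i < n" by simp
  have "wpp 52 (\<lambda>M'. rowinv M' c n) (11, M) ((7 + (25 * Suc c + 2) + 9) + ((n - Suc i) * (25 * c + 43) + 1))"
    apply (rule wp_seq[OF row_body[OF Suc.prems(1) iN]])
    apply (rule Suc.hyps)
    using Suc.hyps(2) iN by auto
  moreover have "n - i = Suc (n - Suc i)" using iN by simp
  then have "(n - i) * (25 * c + 43) + 1 = (7 + (25 * Suc c + 2) + 9) + ((n - Suc i) * (25 * c + 43) + 1)"
    by simp
  ultimately show ?case by (simp only:)
qed

definition colinv :: "mem \<Rightarrow> nat \<Rightarrow> bool" where
  "colinv M c \<longleftrightarrow> M ONE = 1 \<and> M SS = Sd \<and> M CC = int c \<and> M COL = addrT c 0 \<and> M ZERO = 0 \<and> memok M c 0"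

definition fininv :: "mem \<Rightarrow> nat \<Rightarrow> bool" where
  "fininv M c \<longleftrightarrow> rowinv M c n \<and> L \<le> Tab x r n c"

lemma col_to_row:
  assumes inv: "colinv M c"
  shows "wpp 11 (\<lambda>M'. rowinv M' c 0) (7, M) 4"
proof -
  from inv have f: "M ONE = 1" "M SS = Sd" "M CC = int c" "M COL = addrT c 0" "M ZERO = 0" "memok M c 0"
    unfolding colinv_def by auto
  have m0: "M 0 = N" using memok_inp[OF f(6), of 0] Tb_pos by (simp add: input_mem_def N_def)
  show ?thesis
    apply ((rule wp_done, simp add: rowinv_def f m0 memok_upd) | rule conjI | rule impI | (rule wp_stepn, simp, simp, simp, simp add: f m0 adr split: if_split))+
    done
qed

lemma addrT_next: "addrT (Suc c) 0 = addrT c n + 2"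
  unfolding addrT_def Sd_def N_def by (simp add: algebra_simps)

lemma memok_next: "memok M c n \<Longrightarrow> memok M (Suc c) 0"
  unfolding memok_def
  apply (intro conjI)
     apply blast
    apply (simp add: less_Suc_eq, blast)
   apply (metis addrT_next dual_order.refl le_SucE)
  using addrT_next by (metis add_le_cancel_left dual_order.trans le_add_same_cancel1 zero_le_numeral)

lemma m1L: "memok M c i \<Longrightarrow> M 1 = L"
proof -
  assume m: "memok M c i"
  have "(1::int) < Tb" using N_nonneg unfolding Tb_def by linarith
  then show ?thesis using memok_inp[OF m, of 1] by (simp add: input_mem_def)
qed

lemma col_check_next:
  assumes inv: "rowinv M c n" and lt: "Tab x r n c < L"
  shows "wpp 7 (\<lambda>M'. colinv M' (Suc c)) (52, M) 6"
proof -
  from inv have f: "M ONE = 1" "M SS = Sd" "M CC = int c" "M COL = addrT c 0" "M ZERO = 0"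
    "M IA = addrT c n" "memok M c n"
    unfolding rowinv_def by auto
  have rd: "M (addrT c n) = Tab x r n c" using memok_read[OF f(7), of 0] by simp
  have l: "M 1 = L" using m1L[OF f(7)] .
  have nx: "addrT c 0 + Sd = addrT (Suc c) 0" unfolding addrT_def by (simp add: algebra_simps)
  show ?thesis
    apply ((rule wp_done, simp add: colinv_def f memok_upd memok_next nx) | rule conjI | rule impI | (rule wp_stepn, simp, simp, simp, simp add: f rd l lt adr split: if_split))+
    done
qed

lemma col_check_done:
  assumes inv: "rowinv M c n" and ge: "\<not> Tab x r n c < L"
  shows "wpp 59 (\<lambda>M'. fininv M' c) (52, M) 4"
proof -
  from inv have f: "M IA = addrT c n" "memok M c n" unfolding rowinv_def by auto
  have rd: "M (addrT c n) = Tab x r n c" using memok_read[OF f(2), of 0] by simp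
  have l: "M 1 = L" using m1L[OF f(2)] .
  have ge': "L \<le> Tab x r n c" using ge by simp
  have inv2: "rowinv (M(T1 := v)) c n" for v using inv unfolding rowinv_def by (simp add: memok_upd)
  show ?thesis
    apply ((rule wp_done, simp add: fininv_def inv2 ge') | rule conjI | rule impI | (rule wp_stepn, simp, simp, simp, simp add: f rd l ge adr split: if_split))+
    done
qed

definition colb :: "nat \<Rightarrow> nat" where "colb c = n * (25 * c + 43) + 11"

lemma colb_mono: "c \<le> c' \<Longrightarrow> colb c \<le> colb c'"
  unfolding colb_def by simp

lemma col_next: "colinv M c \<Longrightarrow> Tab x r n c < L \<Longrightarrow> wpp 7 (\<lambda>M'. colinv M' (Suc c)) (7, M) (colb c)"
  unfolding colb_def
  apply (rule wp_mono[OF wp_seq[OF wp_seq[OF col_to_row]]], assumption)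
    apply (rule row_loop, assumption, simp)
   apply (erule col_check_next, assumption)
  by auto

lemma col_done: "colinv M c \<Longrightarrow> \<not> Tab x r n c < L \<Longrightarrow> wpp 59 (\<lambda>M'. fininv M' c) (7, M) (colb c)"
  unfolding colb_def
  apply (rule wp_mono[OF wp_seq[OF wp_seq[OF col_to_row]]], assumption)
    apply (rule row_loop, assumption, simp)
   apply (erule col_check_done, assumption)
  by auto

lemma outer: "colinv M c \<Longrightarrow> c \<le> cs \<Longrightarrow> (\<forall>c'<cs. Tab x r n c' < L) \<Longrightarrow> L \<le> Tab x r n cs \<Longrightarrow>
   wpp 59 (\<lambda>M'. fininv M' cs) (7, M) ((cs - c + 1) * colb cs)"
proof (induction "cs - c" arbitrary: c M)
  case 0
  then have "c = cs" by simp
  then show ?case using col_done[of M cs] 0 by simp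
next
  case (Suc d)
  then have lt: "c < cs" by simp
  have "wpp 59 (\<lambda>M'. fininv M' cs) (7, M) (colb c + (cs - Suc c + 1) * colb cs)"
    apply (rule wp_seq[OF col_next[OF Suc.prems(1)]])
    using Suc.prems lt apply simp
    apply (rule Suc.hyps)
    using Suc.hyps(2) Suc.prems lt by auto
  then show ?case
    apply (rule wp_mono)
    using colb_mono[of c cs] lt Suc.hyps(2) by (auto simp: Suc_diff_Suc)
qed

lemma prog_Suc0[simp]: "prog ! Suc 0 = Add SS 0 0" by (simp add: prog_def)

lemma memok_init: "memok (input_mem n L x r) 0 0"
  unfolding memok_def
  apply (intro conjI)
  apply simp
  apply simp
  apply (simp add: addrT_def input_mem_def Tb_def N_def)
  apply (simp add: addrT_def input_mem_def Tb_def N_def)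
  done

lemma init: "wpp 7 (\<lambda>M'. colinv M' 0) (0, input_mem n L x r) 7"
proof -
  have m: "memok (input_mem n L x r) 0 0" by (rule memok_init)
  have m0: "input_mem n L x r 0 = N" by (simp add: input_mem_def N_def)
  have ad: "N + N + 1 + 1 + N = addrT 0 0" "3 * N + 2 = addrT 0 0" unfolding addrT_def Tb_def by simp_all
  show ?thesis
    apply ((rule wp_done, simp add: colinv_def m memok_upd m0 ad Sd_def) | rule conjI | rule impI | (rule wp_stepn, simp, simp, simp, simp add: m0 adr numeral_2_eq_2[symmetric] split: if_split))+
    done
qed

end


context inst begin

lemma adr_sym: "0 \<le> (a::int) \<Longrightarrow> (- 1 = a) \<longleftrightarrow> False" "0 \<le> (a::int) \<Longrightarrow> (- numeral w = a) \<longleftrightarrow> False"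
  using nonneg_neq[of a w] by auto

fun cd :: "nat \<Rightarrow> nat \<Rightarrow> nat" where
  "cd cs 0 = cs"
| "cd cs (Suc d) = cd cs d - Ktab x r (n - d) (cd cs d)"

definition ccol :: "nat \<Rightarrow> nat \<Rightarrow> nat" where "ccol cs m = cd cs (n - m)"

lemma ccol_n: "ccol cs n = cs" by (simp add: ccol_def)

lemma ccol_step: "0 < m \<Longrightarrow> m \<le> n \<Longrightarrow> ccol cs (m - 1) = ccol cs m - Ktab x r m (ccol cs m)"
proof -
  assume "0 < m" "m \<le> n"
  then have "n - (m - 1) = Suc (n - m)" "n - (n - m) = m" by auto
  then show ?thesis unfolding ccol_def by simp
qed

lemma cd_le: "cd cs d \<le> cs" by (induction d) auto

lemma ccol_le: "ccol cs m \<le> cs" unfolding ccol_def by (rule cd_le)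

definition yout :: "nat \<Rightarrow> nat \<Rightarrow> int" where
  "yout cs i = besty (Tab x r i (ccol cs i)) (int (Ktab x r (Suc i) (ccol cs (Suc i)))) (x i) (r i)"

definition tabok :: "mem \<Rightarrow> nat \<Rightarrow> bool" where
  "tabok M cs \<longleftrightarrow> (\<forall>c'\<le>cs. \<forall>j. 1 \<le> j \<and> j \<le> n \<longrightarrow> M (addrT c' j) = Tab x r j c' \<and> M (addrT c' j + 1) = int (Ktab x r j c')) \<and>
     (\<forall>c'\<le>cs. M (addrT c' 0) = 0)"

definition inok :: "mem \<Rightarrow> bool" where
  "inok M \<longleftrightarrow> (\<forall>i<n. M (2 + int i) = x i \<and> M (2 + N + int i) = r i)"

definition outok :: "mem \<Rightarrow> nat \<Rightarrow> nat \<Rightarrow> bool" where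
  "outok M cs m \<longleftrightarrow> (\<forall>i. m \<le> i \<and> i < n \<longrightarrow> M (2 + 2 * N + int i) = yout cs i)"

definition recinv :: "mem \<Rightarrow> nat \<Rightarrow> nat \<Rightarrow> bool" where
  "recinv M cs m \<longleftrightarrow> M ONE = 1 \<and> M SS = Sd \<and> M ZERO = 0 \<and> M CNT = int m \<and> M XA = 2 + int m \<and>
     M RA = 2 + N + int m \<and> M YA = 2 + 2 * N + int m \<and> M IA = addrT (ccol cs m) m \<and>
     tabok M cs \<and> inok M \<and> outok M cs m"

lemma tabok_upd: "a < Tb \<Longrightarrow> tabok M cs \<Longrightarrow> tabok (M(a := v)) cs"
  unfolding tabok_def using addrT_ge by (smt (verit) fun_upd_other)

lemma tabok_upd_neg: "a < 0 \<Longrightarrow> tabok M cs \<Longrightarrow> tabok (M(a := v)) cs"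
  using tabok_upd Tb_pos by simp

lemma inok_upd: "a < 0 \<or> 2 + 2 * N \<le> a \<Longrightarrow> inok M \<Longrightarrow> inok (M(a := v))"
  unfolding inok_def by (auto simp: N_def)

lemma outok_upd: "a < 0 \<Longrightarrow> outok M cs m \<Longrightarrow> outok (M(a := v)) cs m"
  unfolding outok_def by (auto simp: N_def)

lemma outok_store: "outok M cs (Suc m) \<Longrightarrow> outok (M(2 + 2 * N + int m := yout cs m)) cs m"
  unfolding outok_def
proof (intro allI impI)
  fix i assume h: "\<forall>i. Suc m \<le> i \<and> i < n \<longrightarrow> M (2 + 2 * N + int i) = yout cs i" and i: "m \<le> i \<and> i < n"
  show "(M(2 + 2 * N + int m := yout cs m)) (2 + 2 * N + int i) = yout cs i"
  proof (cases "i = m")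
    case True then show ?thesis by simp
  next
    case False then have "Suc m \<le> i" using i by simp
    then show ?thesis using h i False by simp
  qed
qed


lemma memok_tabok: "memok M cs n \<Longrightarrow> tabok M cs"
  unfolding memok_def tabok_def by (meson le_neq_implies_less)

lemma memok_inok: "memok M cs i \<Longrightarrow> inok M"
proof -
  assume m: "memok M cs i"
  show ?thesis unfolding inok_def
  proof (intro allI impI conjI)
    fix j assume j: "j < n"
    show "M (2 + int j) = x j" using memok_inp[OF m, of "2 + int j"] inp_x[OF j] j by (simp add: Tb_def N_def)
    show "M (2 + N + int j) = r j" using memok_inp[OF m, of "2 + N + int j"] inp_r[OF j] j by (simp add: Tb_def N_def)
  qed
qed

lemma rec_start:
  assumes inv: "fininv M cs"
  shows "wpp 61 (\<lambda>M'. recinv M' cs n) (59, M) 2"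
proof -
  from inv have f: "M ONE = 1" "M SS = Sd" "M ZERO = 0" "M IA = addrT cs n" "M XA = 2 + N" "M RA = 2 + N + N"
    "memok M cs n" unfolding fininv_def rowinv_def N_def by auto
  have m0: "M 0 = N" using memok_inp[OF f(7), of 0] Tb_pos by (simp add: input_mem_def N_def)
  have t: "tabok (M(a := v, b := w)) cs" if "a < 0" "b < 0" for a b v w
  proof -
    have "a < Tb" "b < Tb" using that Tb_pos by auto
    then show ?thesis using memok_tabok[OF f(7)] by (simp add: tabok_upd)
  qed
  have i: "inok (M(a := v, b := w))" if "a < 0" "b < 0" for a b v w
    using memok_inok[OF f(7)] that by (simp add: inok_upd)
  have o: "outok M' cs n" for M' unfolding outok_def by simp
  show ?thesis
    apply ((rule wp_done, simp add: recinv_def f m0 t i o ccol_n N_def) | rule conjI | rule impI | (rule wp_stepn, simp, simp, simp, simp add: f m0 adr adr_sym split: if_split))+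
    done
qed

definition mlinv :: "mem \<Rightarrow> nat \<Rightarrow> nat \<Rightarrow> nat \<Rightarrow> bool" where
  "mlinv M cs m j \<longleftrightarrow> M ONE = 1 \<and> M SS = Sd \<and> M ZERO = 0 \<and> M CNT = int (m - 1) \<and> M XA = 2 + int (m - 1) \<and>
     M RA = 2 + N + int (m - 1) \<and> M YA = 2 + 2 * N + int (m - 1) \<and>
     M KR = int (Ktab x r m (ccol cs m)) \<and> M XV = x (m - 1) \<and> M RV = r (m - 1) \<and> M T2 = int j \<and>
     j \<le> Ktab x r m (ccol cs m) \<and>
     M IA = addrT (ccol cs m - (Ktab x r m (ccol cs m) - j)) (m - 1) \<and>
     tabok M cs \<and> inok M \<and> outok M cs m"

lemma Ktab_le: "0 < m \<Longrightarrow> Ktab x r m c \<le> c"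
  using Ktab_props[of x r "m - 1" c] by simp

lemma rec_head:
  assumes inv: "recinv M cs m" and m0: "0 < m" and mn: "m \<le> n"
  shows "wpp 73 (\<lambda>M'. mlinv M' cs m (Ktab x r m (ccol cs m))) (61, M) 12"
proof -
  obtain m' where mm: "m = Suc m'" using m0 gr0_implies_Suc by blast
  define cc where "cc = ccol cs m"
  define k where "k = Ktab x r m cc"
  define xa where "xa = 2 + int m'"
  define ra where "ra = 2 + N + int m'"
  define ya where "ya = 2 + 2 * N + int m'"
  define ia where "ia = addrT cc m'"
  from inv have f: "M ONE = 1" "M SS = Sd" "M ZERO = 0" "M CNT = int m' + 1" "M XA = xa + 1"
    "M RA = ra + 1" "M YA = ya + 1" "M IA = ia + 2" "tabok M cs" "inok M" "outok M cs m"
    unfolding recinv_def xa_def ra_def ya_def ia_def cc_def mm by (auto simp: addrT_Suc[symmetric])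
  have cc: "cc \<le> cs" unfolding cc_def by (rule ccol_le)
  have rd: "M (ia + 3) = int k" "M xa = x m'" "M ra = r m'"
  proof -
    have e: "ia + 3 = addrT cc m + 1" unfolding ia_def mm addrT_Suc[symmetric] by simp
    have "M (addrT cc m + 1) = int k" using f(9) cc m0 mn unfolding tabok_def k_def by simp
    then show "M (ia + 3) = int k" by (simp only: e)
    show "M xa = x m'" "M ra = r m'" using f(10) mn unfolding inok_def mm xa_def ra_def by auto
  qed
  have nn: "0 \<le> xa" "0 \<le> ra" "0 \<le> ya" "0 \<le> ia" unfolding xa_def ra_def ya_def ia_def by auto
  have rd2: "M (3 + ia) = int k" using rd(1) by (simp add: add.commute)
  have o: "outok M cs (Suc m')" using f(11) mm by simp
  have eqs: "ccol cs (Suc m') = cc" "Ktab x r (Suc m') cc = k" unfolding cc_def k_def mm by simp_all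
  have cnt: "int m' + 1 \<noteq> 0" by simp
  have t: "tabok M' cs \<and> inok M' \<and> outok M' cs m" if "\<forall>a. a \<ge> 0 \<longrightarrow> M' a = M a" for M'
  proof -
    have "tabok M' cs" using f(9) that unfolding tabok_def using addrT_nonneg by simp
    moreover have "inok M'" using f(10) that unfolding inok_def by simp
    moreover have "outok M' cs m" using f(11) that unfolding outok_def by simp
    ultimately show ?thesis by blast
  qed
  show ?thesis
    apply ((rule wp_done, simp add: mlinv_def mm f o rd rd2 nn eqs tabok_upd_neg inok_upd outok_upd xa_def[symmetric] ra_def[symmetric] ya_def[symmetric] ia_def[symmetric]) | rule conjI | rule impI | (rule wp_stepn, simp, simp, simp, simp add: f rd rd2 nn cnt adr adr_sym split: if_split))+
    done
qed


lemma ml_body: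
  assumes inv: "mlinv M cs m (Suc j)" and m0: "0 < m"
  shows "wpp 73 (\<lambda>M'. mlinv M' cs m j) (73, M) 4"
proof -
  define cc where "cc = ccol cs m"
  define k where "k = Ktab x r m cc"
  define a1 where "a1 = addrT (cc - (k - j)) (m - 1)"
  have kc: "k \<le> cc" unfolding k_def using Ktab_le[OF m0] .
  from inv have jk: "Suc j \<le> k" unfolding mlinv_def k_def cc_def by simp
  have ea: "addrT (cc - (k - Suc j)) (m - 1) = a1 + Sd"
  proof -
    have "cc - (k - Suc j) = Suc (cc - (k - j))" using jk kc by simp
    then show ?thesis unfolding a1_def addrT_def by (simp add: algebra_simps)
  qed
  from inv have ia0: "M IA = addrT (cc - (k - Suc j)) (m - 1)" unfolding mlinv_def k_def cc_def by blast
  from inv have f: "M ONE = 1" "M SS = Sd" "M T2 = int j + 1" "M IA = a1 + Sd"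
    unfolding mlinv_def k_def cc_def using ia0 ea by auto
  have j1: "int j + 1 \<noteq> 0" by simp
  have fin: "mlinv (M(IA := a1, T2 := int j)) cs m j"
    using inv jk unfolding mlinv_def k_def cc_def a1_def
    by (simp add: tabok_upd_neg inok_upd outok_upd)
  show ?thesis
    apply ((rule wp_done, simp add: fin) | rule conjI | rule impI | (rule wp_stepn, simp, simp, simp, simp add: f j1 split: if_split))+
    done
qed

lemma ml_exit:
  assumes inv: "mlinv M cs m 0"
  shows "wpp 77 (\<lambda>M'. mlinv M' cs m 0) (73, M) 1"
proof -
  from inv have f: "M T2 = 0" unfolding mlinv_def by simp
  show ?thesis
    apply ((rule wp_done, simp add: inv) | rule conjI | rule impI | (rule wp_stepn, simp, simp, simp, simp add: f split: if_split))+
    done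
qed

lemma ml_loop: "mlinv M cs m j \<Longrightarrow> 0 < m \<Longrightarrow> wpp 77 (\<lambda>M'. mlinv M' cs m 0) (73, M) (4 * j + 1)"
proof (induction j arbitrary: M)
  case 0 then show ?case using ml_exit by simp
next
  case (Suc j)
  have "wpp 77 (\<lambda>M'. mlinv M' cs m 0) (73, M) (4 + (4 * j + 1))"
    apply (rule wp_seq[OF ml_body[OF Suc.prems]])
    using Suc.IH Suc.prems(2) by blast
  then show ?case by simp
qed

lemma outok_store2: "a = 2 + 2 * N + int m \<Longrightarrow> v = yout cs m \<Longrightarrow> outok M cs (Suc m) \<Longrightarrow> outok (M(a := v)) cs m"
  using outok_store by simp

lemma rec_tail:
  assumes inv: "mlinv M cs m 0" and m0: "0 < m" and mn: "m \<le> n"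
  shows "wpp 61 (\<lambda>M'. recinv M' cs (m - 1)) (77, M) 12"
proof -
  obtain m' where mm: "m = Suc m'" using m0 gr0_implies_Suc by blast
  define cc where "cc = ccol cs m"
  define k where "k = Ktab x r m cc"
  define ya where "ya = 2 + 2 * N + int m'"
  define ia where "ia = addrT (ccol cs m') m'"
  define pv where "pv = Tab x r m' (ccol cs m')"
  have cstep: "ccol cs m' = cc - k" using ccol_step[OF m0 mn] unfolding cc_def k_def mm by simp
  from inv have f: "M ONE = 1" "M SS = Sd" "M ZERO = 0" "M CNT = int m'" "M XA = 2 + int m'"
    "M RA = 2 + N + int m'" "M YA = ya" "M KR = int k" "M XV = x m'" "M RV = r m'"
     "M IA = ia" "tabok M cs" "inok M" "outok M cs (Suc m')"
    unfolding mlinv_def ya_def ia_def k_def cc_def mm by (auto simp: cstep[unfolded cc_def k_def mm])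
  have rd: "M ia = pv"
  proof (cases "m' = 0")
    case True then show ?thesis using f(12) ccol_le unfolding tabok_def ia_def pv_def by simp
  next
    case False then show ?thesis using f(12) ccol_le mn mm unfolding tabok_def ia_def pv_def by simp
  qed
  have nn: "0 \<le> ya" "0 \<le> ia" unfolding ya_def ia_def by auto
  have yaTb: "ya < Tb" "2 + 2 * N \<le> ya" using mn mm unfolding ya_def Tb_def N_def by auto
  have yv: "yout cs m' = besty pv (int k) (x m') (r m')"
    unfolding yout_def pv_def k_def cc_def mm by simp
  have fin: "recinv M' cs m'" if "\<forall>a. a \<noteq> ya \<longrightarrow> a \<ge> 0 \<longrightarrow> M' a = M a" "M' ONE = 1" "M' SS = Sd" "M' ZERO = 0"
    "M' CNT = int m'" "M' XA = 2 + int m'" "M' RA = 2 + N + int m'" "M' YA = ya" "M' IA = ia" "M' ya = yout cs m'" for M'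
  proof -
    have "tabok M' cs" using f(12) that(1) yaTb addrT_ge unfolding tabok_def
      by (smt (verit) addrT_nonneg)
    moreover have "inok M'" unfolding inok_def
    proof (intro allI impI conjI)
      fix i assume i: "i < n"
      then have "2 + int i < 2 + 2 * N" "2 + N + int i < 2 + 2 * N" by (auto simp: N_def)
      then have "2 + int i \<noteq> ya" "2 + N + int i \<noteq> ya" "0 \<le> 2 + int i" "0 \<le> 2 + N + int i" using yaTb by auto
      then show "M' (2 + int i) = x i" "M' (2 + N + int i) = r i" using that(1) f(13) i unfolding inok_def by auto
    qed
    moreover have "outok M' cs m'" using f(14) that(1,10) unfolding outok_def ya_def
      by (smt (verit) N_nonneg Suc_leI le_neq_implies_less of_nat_0_le_iff of_nat_eq_iff)
    ultimately show ?thesis unfolding recinv_def using that ia_def ya_def by simp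
  qed
  show ?thesis
    apply ((rule wp_done, simp add: mm, rule fin, simp_all add: f yv besty_def adr adr_sym nn) | rule conjI | rule impI | (rule wp_stepn, simp, simp, simp, simp add: f rd nn adr adr_sym split: if_split))+
    done
qed

lemma rec_exit:
  assumes inv: "recinv M cs 0"
  shows "wpp 90 (\<lambda>M'. outok M' cs 0) (61, M) 1"
proof -
  from inv have f: "M CNT = 0" "outok M cs 0" unfolding recinv_def by simp_all
  show ?thesis
    apply ((rule wp_done, simp add: f) | rule conjI | rule impI | (rule wp_stepn, simp, simp, simp, simp add: f split: if_split))+
    done
qed


lemma rec_body:
  assumes inv: "recinv M cs m" and m0: "0 < m" and mn: "m \<le> n"
  shows "wpp 61 (\<lambda>M'. recinv M' cs (m - 1)) (61, M) (25 + 4 * cs)"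
proof -
  have kc: "Ktab x r m (ccol cs m) \<le> cs" using Ktab_le[OF m0] ccol_le order_trans by blast
  have "wpp 61 (\<lambda>M'. recinv M' cs (m - 1)) (61, M) (12 + (4 * Ktab x r m (ccol cs m) + 1) + 12)"
    apply (rule wp_seq[OF wp_seq[OF rec_head[OF inv m0 mn]]])
     apply (erule ml_loop[OF _ m0])
    apply (erule rec_tail[OF _ m0 mn])
    done
  then show ?thesis by (rule wp_mono) (use kc in auto)
qed

lemma rec_loop: "recinv M cs m \<Longrightarrow> m \<le> n \<Longrightarrow> wpp 90 (\<lambda>M'. outok M' cs 0) (61, M) (m * (25 + 4 * cs) + 1)"
proof (induction m arbitrary: M)
  case 0 then show ?case using rec_exit by simp
next
  case (Suc m)
  have "wpp 90 (\<lambda>M'. outok M' cs 0) (61, M) ((25 + 4 * cs) + (m * (25 + 4 * cs) + 1))"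
    apply (rule wp_seq[OF rec_body[OF Suc.prems(1)]])
    using Suc by auto
  then show ?case by (simp add: algebra_simps)
qed

lemma whole: "(\<forall>c'<cs. Tab x r n c' < L) \<Longrightarrow> L \<le> Tab x r n cs \<Longrightarrow>
   wpp 90 (\<lambda>M'. outok M' cs 0) (0, input_mem n L x r) (7 + ((cs + 1) * colb cs + (2 + (n * (25 + 4 * cs) + 1))))"
proof -
  assume h1: "\<forall>c'<cs. Tab x r n c' < L" and h2: "L \<le> Tab x r n cs"
  have b: "wpp 59 (\<lambda>M'. fininv M' cs) (7, M) ((cs + 1) * colb cs)" if "colinv M 0" for M
    using outer[OF that _ h1 h2] by simp
  have d: "wpp 90 (\<lambda>M'. outok M' cs 0) (61, M) (n * (25 + 4 * cs) + 1)" if "recinv M cs n" for M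
    using rec_loop[OF that] by simp
  show ?thesis
    by (rule wp_seq[OF init wp_seq[OF b wp_seq[OF rec_start d]]])
qed

end


fun rch :: "(nat \<Rightarrow> real) \<Rightarrow> (nat \<Rightarrow> real) \<Rightarrow> nat \<Rightarrow> real" where
  "rch y r 0 = 0"
| "rch y r (Suc i) = (if y i - r i \<le> rch y r i then max (rch y r i) (y i + r i) else rch y r i)"

lemma rch_nonneg: "rch y r i \<ge> 0"
  by (induction i) auto

lemma rch_Suc_ge: "rch y r i \<le> rch y r (Suc i)" by auto

lemma rch_mono: "i \<le> j \<Longrightarrow> rch y r i \<le> rch y r j"
  by (induction j) (auto simp: le_Suc_eq intro: order_trans)

definition raiser :: "(nat \<Rightarrow> real) \<Rightarrow> (nat \<Rightarrow> real) \<Rightarrow> nat \<Rightarrow> bool" where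
  "raiser y r i \<longleftrightarrow> y i - r i \<le> rch y r i \<and> rch y r i < y i + r i"

lemma raiser_R: "raiser y r i \<Longrightarrow> rch y r (Suc i) = y i + r i"
  unfolding raiser_def by auto

lemma exists_raiser:
  assumes L: "L > 0" and R: "rch y r n \<ge> L" and z: "0 \<le> z" "z \<le> L"
  shows "\<exists>i<n. raiser y r i \<and> y i - r i \<le> z \<and> z \<le> y i + r i"
proof -
  let ?P = "\<lambda>i. z \<le> rch y r (Suc i) \<and> 0 < rch y r (Suc i)"
  have n0: "n \<noteq> 0" using L R by (cases n) auto
  then have "?P (n - 1)" using R L z by auto
  define i0 where "i0 = (LEAST i. ?P i)"
  have P0: "?P i0" unfolding i0_def by (rule LeastI) fact
  have mn: "\<And>j. ?P j \<Longrightarrow> i0 \<le> j" unfolding i0_def by (rule Least_le)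
  have i0n: "i0 < n" using mn[OF \<open>?P (n - 1)\<close>] n0 by simp
  have before: "rch y r i0 \<le> z \<and> (rch y r i0 < z \<or> rch y r i0 = 0)"
  proof (cases i0)
    case 0 then show ?thesis using z by simp
  next
    case (Suc j)
    then have "\<not> ?P j" using mn by fastforce
    then have "rch y r i0 < z \<or> rch y r i0 \<le> 0" using Suc by auto
    then show ?thesis using rch_nonneg[of y r i0] z by auto
  qed
  have raised: "rch y r i0 < rch y r (Suc i0)" using before P0 by (cases "y i0 - r i0 \<le> rch y r i0") auto
  then have lk: "y i0 - r i0 \<le> rch y r i0" by (cases "y i0 - r i0 \<le> rch y r i0") auto
  then have Rv: "rch y r (Suc i0) = max (rch y r i0) (y i0 + r i0)" by simp
  with raised have "rch y r i0 < y i0 + r i0" by auto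
  then have ra: "raiser y r i0" using lk unfolding raiser_def by simp
  show ?thesis using i0n ra lk before P0 raiser_R[OF ra] by (intro exI[of _ i0]) auto
qed

lemma rch_to_op:
  assumes L: "L > 0" and R: "rch y r n \<ge> L"
  shows "order_preserving n L r y"
proof -
  define l where "l i = y i - r i" for i
  define S where "S = {i. i < n \<and> raiser y r i \<and> (\<forall>k. i < k \<and> k < n \<and> raiser y r k \<longrightarrow> l i < l k)}"
  have Ssub: "S \<subseteq> {..<n}" unfolding S_def by auto
  have incr: "y i < y j" if "i \<in> S" "j \<in> S" "i < j" for i j
  proof -
    have li: "l i < l j" using that unfolding S_def by auto
    have "y i + r i = rch y r (Suc i)" using that raiser_R unfolding S_def by auto
    also have "\<dots> \<le> rch y r j" by (rule rch_mono) (use that(3) in simp)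
    also have "\<dots> < y j + r j" using that unfolding S_def raiser_def by auto
    finally show ?thesis using li unfolding l_def by simp
  qed
  have act: "active L r y S" unfolding active_def
  proof
    fix z assume "z \<in> {0..L}"
    then have z: "0 \<le> z" "z \<le> L" by auto
    define C where "C = {i. i < n \<and> raiser y r i \<and> y i - r i \<le> z \<and> z \<le> y i + r i}"
    have Cne: "C \<noteq> {}" using exists_raiser[OF L R z] unfolding C_def by auto
    have Cfin: "finite C" unfolding C_def by auto
    define i1 where "i1 = Max C"
    have i1C: "i1 \<in> C" unfolding i1_def using Cne Cfin by simp
    have i1max: "k \<in> C \<Longrightarrow> k \<le> i1" for k unfolding i1_def using Cfin by simp
    have "i1 \<in> S" unfolding S_def
    proof (intro CollectI conjI allI impI)
      show "i1 < n" "raiser y r i1" using i1C unfolding C_def by auto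
      fix k assume k: "i1 < k \<and> k < n \<and> raiser y r k"
      show "l i1 < l k"
      proof (rule ccontr)
        assume "\<not> l i1 < l k"
        then have "y k - r k \<le> z" using i1C unfolding C_def l_def by auto
        moreover have "z \<le> y k + r k"
        proof -
          have "z \<le> y i1 + r i1" using i1C unfolding C_def by auto
          also have "\<dots> = rch y r (Suc i1)" using raiser_R i1C unfolding C_def by auto
          also have "\<dots> \<le> rch y r k" by (rule rch_mono) (use k in simp)
          also have "\<dots> < y k + r k" using k unfolding raiser_def by auto
          finally show ?thesis by simp
        qed
        ultimately have "k \<in> C" using k unfolding C_def by auto
        then show False using i1max k by fastforce
      qed
    qed
    then show "z \<in> (\<Union>i\<in>S. {y i - r i..y i + r i})" using i1C unfolding C_def by auto
  qed
  show ?thesis unfolding order_preserving_def using Ssub act incr by blast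
qed

lemma op_feasible: "order_preserving n L r y \<Longrightarrow> feasible n L r y"
  unfolding order_preserving_def feasible_def active_def by blast


fun rchS :: "(nat \<Rightarrow> real) \<Rightarrow> (nat \<Rightarrow> real) \<Rightarrow> nat set \<Rightarrow> nat \<Rightarrow> real" where
  "rchS y r S 0 = 0"
| "rchS y r S (Suc i) = (if i \<in> S \<and> y i - r i \<le> rchS y r S i then max (rchS y r S i) (y i + r i) else rchS y r S i)"

lemma rchS_nonneg: "rchS y r S i \<ge> 0" by (induction i) auto

lemma rchS_mono: "i \<le> j \<Longrightarrow> rchS y r S i \<le> rchS y r S j"
  by (induction j) (auto simp: le_Suc_eq intro: order_trans)

lemma rchS_le: "rchS y r S i \<le> rch y r i"
  by (induction i) auto

lemma find_jump: "rchS y r S j1 \<le> q \<Longrightarrow> j1 \<le> m \<Longrightarrow> q < rchS y r S m \<Longrightarrow>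
   \<exists>k. j1 \<le> k \<and> k < m \<and> rchS y r S k \<le> q \<and> q < rchS y r S (Suc k)"
proof (induction m)
  case 0 then show ?case by simp
next
  case (Suc m)
  show ?case
  proof (cases "q < rchS y r S m")
    case True
    then have "j1 \<le> m" using Suc.prems by (cases "j1 = Suc m") auto
    then show ?thesis using Suc.IH Suc.prems True by (meson less_Suc_eq)
  next
    case False
    then show ?thesis using Suc.prems
      by (intro exI[of _ m]) (auto simp: le_Suc_eq)
  qed
qed

lemma op_to_rch:
  assumes L: "L > 0" and op: "order_preserving n L r y"
  shows "rch y r n \<ge> L"
proof -
  obtain S where S: "S \<subseteq> {..<n}" "active L r y S" "\<And>i j. i \<in> S \<Longrightarrow> j \<in> S \<Longrightarrow> i < j \<Longrightarrow> y i < y j"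
    using op unfolding order_preserving_def by blast
  define p where "p = rchS y r S n"
  have cov: "\<And>w. 0 \<le> w \<Longrightarrow> w \<le> L \<Longrightarrow> \<exists>j\<in>S. y j - r j \<le> w \<and> w \<le> y j + r j"
  proof -
    fix w :: real assume "0 \<le> w" "w \<le> L"
    then have "w \<in> {0..L}" by simp
    then have "w \<in> (\<Union>i\<in>S. {y i - r i..y i + r i})" using S(2) unfolding active_def by blast
    then show "\<exists>j\<in>S. y j - r j \<le> w \<and> w \<le> y j + r j" by auto
  qed
  have finS: "finite S" using S(1) finite_subset by blast
  have "L \<le> p"
  proof (rule ccontr)
    assume "\<not> L \<le> p"
    then have pL: "p < L" by simp
    have p0: "0 \<le> p" unfolding p_def by (rule rchS_nonneg)
    define A where "A = {j \<in> S. y j + r j > p}"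
    have Afin: "finite A" using finS unfolding A_def by simp
    obtain jL where jL: "jL \<in> S" "y jL - r jL \<le> L" "L \<le> y jL + r jL" using cov[of L] L by auto
    have Ane: "A \<noteq> {}" using jL pL unfolding A_def by auto
    define mv where "mv = Min ((\<lambda>j. y j - r j) ` A)"
    have "mv \<in> (\<lambda>j. y j - r j) ` A" using Afin Ane unfolding mv_def by (intro Min_in) auto
    then obtain j0 where j0A: "j0 \<in> A" and j0v: "y j0 - r j0 = mv" by auto
    have j0min: "\<And>j. j \<in> A \<Longrightarrow> y j0 - r j0 \<le> y j - r j" unfolding j0v mv_def using Afin by simp
    have lj0: "y j0 - r j0 \<le> p"
    proof (rule ccontr)
      assume "\<not> y j0 - r j0 \<le> p"
      define w where "w = (p + min (y j0 - r j0) L) / 2"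
      have w: "p < w" "w < y j0 - r j0" "w \<le> L" "0 \<le> w" using pL p0 \<open>\<not> y j0 - r j0 \<le> p\<close> unfolding w_def by auto
      obtain k where k: "k \<in> S" "y k - r k \<le> w" "w \<le> y k + r k" using cov[OF w(4) w(3)] by blast
      then have "k \<in> A" using w unfolding A_def by auto
      then show False using j0min[of k] k w by auto
    qed
    have j0n: "j0 < n" using j0A S(1) unfolding A_def by auto
    define q where "q = rchS y r S j0"
    have qp: "q \<le> p" unfolding q_def p_def using rchS_mono j0n by simp
    have nolink: "\<not> y j0 - r j0 \<le> q"
    proof
      assume "y j0 - r j0 \<le> q"
      then have "rchS y r S (Suc j0) = max q (y j0 + r j0)" using j0A unfolding A_def q_def by simp
      moreover have "rchS y r S (Suc j0) \<le> p" unfolding p_def by (rule rchS_mono) (use j0n in simp)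
      ultimately show False using j0A unfolding A_def by auto
    qed
    then have q1: "rchS y r S (Suc j0) = q" unfolding q_def by simp
    have "q < p" using nolink lj0 by simp
    then obtain k where k: "Suc j0 \<le> k" "k < n" "rchS y r S k \<le> q" "q < rchS y r S (Suc k)"
      using find_jump[of y r S "Suc j0" q n] q1 j0n unfolding p_def by auto
    have kS: "k \<in> S" and lk: "y k - r k \<le> rchS y r S k" and Rk: "rchS y r S (Suc k) = y k + r k"
      using k(3,4) by (auto split: if_splits)
    have "rchS y r S (Suc k) \<le> p" unfolding p_def by (rule rchS_mono) (use k in simp)
    then have Rkp: "y k + r k \<le> p" using Rk by simp
    have "y j0 < y k" using S(3)[of j0 k] kS j0A k(1) unfolding A_def by auto
    moreover have "y k - r k < y j0 - r j0" using lk k(3) nolink by simp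
    moreover have "y k + r k < y j0 + r j0" using Rkp j0A unfolding A_def by simp
    ultimately show False by simp
  qed
  then show ?thesis using rchS_le[of y r S n] unfolding p_def by simp
qed


lemma phi_rch:
  fixes \<phi> :: "real \<Rightarrow> real" and ri :: "nat \<Rightarrow> int"
  assumes mono: "\<And>a b. a \<le> b \<Longrightarrow> \<phi> a \<le> \<phi> b"
    and shift: "\<And>v k. \<phi> (v + real_of_int k) = \<phi> v + real_of_int k"
    and z: "\<phi> 0 = 0"
  defines "r \<equiv> (\<lambda>i. real_of_int (ri i))"
  shows "\<phi> (rch y r i) \<le> rch (\<lambda>j. \<phi> (y j)) r i"
proof (induction i)
  case 0 then show ?case using z by simp
next
  case (Suc i)
  let ?p = "rch y r i" and ?p' = "rch (\<lambda>j. \<phi> (y j)) r i"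
  have sh1: "\<phi> (y i - r i) = \<phi> (y i) - r i" using shift[of "y i" "- ri i"] unfolding r_def by simp
  have sh2: "\<phi> (y i + r i) = \<phi> (y i) + r i" using shift[of "y i" "ri i"] unfolding r_def by simp
  show ?case
  proof (cases "y i - r i \<le> ?p")
    case True
    then have "\<phi> (y i) - r i \<le> ?p'" using mono[OF True] sh1 Suc.IH by simp
    then have new: "rch (\<lambda>j. \<phi> (y j)) r (Suc i) = max ?p' (\<phi> (y i) + r i)" by simp
    have "\<phi> (max ?p (y i + r i)) \<le> max (\<phi> ?p) (\<phi> (y i + r i))"
      by (cases "?p \<le> y i + r i") (auto simp: max_def)
    also have "\<dots> \<le> max ?p' (\<phi> (y i) + r i)" using Suc.IH sh2 by simp
    finally show ?thesis using True new by simp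
  next
    case False
    then have "rch y r (Suc i) = ?p" by simp
    then show ?thesis using Suc.IH rch_Suc_ge[of "\<lambda>j. \<phi> (y j)" r i] by simp
  qed
qed

definition hfun :: "real \<Rightarrow> real \<Rightarrow> real" where
  "hfun d t = (if t < frac d then \<bar>real_of_int (floor d) + 1\<bar> else \<bar>real_of_int (floor d)\<bar>)"

lemma hfun_eq: "0 \<le> t \<Longrightarrow> t < 1 \<Longrightarrow> \<bar>real_of_int (ceiling (d - t))\<bar> = hfun d t"
proof -
  assume t: "0 \<le> t" "t < 1"
  define k where "k = floor d"
  define f where "f = frac d"
  have d: "d = real_of_int k + f" "0 \<le> f" "f < 1" unfolding k_def f_def
    by (simp add: frac_def, simp add: frac_ge_0, simp add: frac_lt_1)
  show ?thesis
  proof (cases "t < f")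
    case True
    then have "ceiling (d - t) = k + 1" using d t by (intro ceiling_unique) auto
    then show ?thesis using True unfolding hfun_def k_def[symmetric] f_def[symmetric] by simp
  next
    case False
    then have "ceiling (d - t) = k" using d t by (intro ceiling_unique) auto
    then show ?thesis using False unfolding hfun_def k_def[symmetric] f_def[symmetric] by simp
  qed
qed

lemma hfun_integral: "(hfun d has_integral (\<bar>d\<bar>)) {0..1}"
proof -
  define k where "k = floor d"
  define f where "f = frac d"
  have d: "d = real_of_int k + f" "0 \<le> f" "f < 1" unfolding k_def f_def
    by (simp add: frac_def, simp add: frac_ge_0, simp add: frac_lt_1)
  have i1: "(hfun d has_integral (f * \<bar>real_of_int k + 1\<bar>)) {0..f}"
  proof (rule has_integral_spike_finite[where S = "{f}" and f = "\<lambda>t. \<bar>real_of_int k + 1\<bar>"])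
    show "finite {f}" by simp
    show "hfun d t = \<bar>real_of_int k + 1\<bar>" if "t \<in> {0..f} - {f}" for t
      using that unfolding hfun_def k_def[symmetric] f_def[symmetric] by auto
    show "((\<lambda>t. \<bar>real_of_int k + 1\<bar>) has_integral f * \<bar>real_of_int k + 1\<bar>) {0..f}"
      using has_integral_const_real[of "\<bar>real_of_int k + 1\<bar>" 0 f] d by simp
  qed
  have i2: "(hfun d has_integral ((1 - f) * \<bar>real_of_int k\<bar>)) {f..1}"
  proof (rule has_integral_spike_finite[where S = "{}" and f = "\<lambda>t. \<bar>real_of_int k\<bar>"])
    show "finite {}" by simp
    show "hfun d t = \<bar>real_of_int k\<bar>" if "t \<in> {f..1} - {}" for t
      using that unfolding hfun_def k_def[symmetric] f_def[symmetric] by auto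
    show "((\<lambda>t. \<bar>real_of_int k\<bar>) has_integral (1 - f) * \<bar>real_of_int k\<bar>) {f..1}"
      using has_integral_const_real[of "\<bar>real_of_int k\<bar>" f 1] d by simp
  qed
  have "(hfun d has_integral (f * \<bar>real_of_int k + 1\<bar> + (1 - f) * \<bar>real_of_int k\<bar>)) {0..1}"
    using has_integral_combine[OF _ _ i1 i2] d by simp
  moreover have "f * \<bar>real_of_int k + 1\<bar> + (1 - f) * \<bar>real_of_int k\<bar> = \<bar>d\<bar>"
  proof (cases "k \<ge> 0")
    case True
    then have "\<bar>real_of_int k + 1\<bar> = real_of_int k + 1" "\<bar>real_of_int k\<bar> = real_of_int k" "\<bar>d\<bar> = d" using d by auto
    then show ?thesis using d by (simp add: algebra_simps)
  next
    case False
    then have "k \<le> -1" by simp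
    then have "\<bar>real_of_int k + 1\<bar> = - real_of_int k - 1" "\<bar>real_of_int k\<bar> = - real_of_int k" "\<bar>d\<bar> = - d"
      using d by auto
    then show ?thesis using d by (simp add: algebra_simps)
  qed
  ultimately show ?thesis by simp
qed

lemma good_shift:
  fixes y :: "nat \<Rightarrow> real" and x :: "nat \<Rightarrow> int"
  shows "\<exists>t. 0 \<le> t \<and> t < 1 \<and> (\<Sum>i<n. \<bar>real_of_int (ceiling (y i - t)) - real_of_int (x i)\<bar>) \<le> (\<Sum>i<n. \<bar>y i - real_of_int (x i)\<bar>)"
proof (rule ccontr)
  assume neg: "\<not> ?thesis"
  define D where "D = (\<Sum>i<n. \<bar>y i - real_of_int (x i)\<bar>)"
  define H where "H t = (\<Sum>i<n. hfun (y i - real_of_int (x i)) t)" for t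
  have HI: "(H has_integral D) {0..1}"
    unfolding H_def D_def by (rule has_integral_sum) (auto intro: hfun_integral)
  have gH: "(\<Sum>i<n. \<bar>real_of_int (ceiling (y i - t)) - real_of_int (x i)\<bar>) = H t" if "0 \<le> t" "t < 1" for t
  proof -
    have "\<bar>real_of_int (ceiling (y i - t)) - real_of_int (x i)\<bar> = hfun (y i - real_of_int (x i)) t" for i
    proof -
      have "ceiling (y i - t) - x i = ceiling (y i - real_of_int (x i) - t)"
        by (metis ceiling_diff_of_int diff_diff_eq2 diff_diff_eq add.commute)
      then have "real_of_int (ceiling (y i - t)) - real_of_int (x i) = real_of_int (ceiling (y i - real_of_int (x i) - t))"
        by (metis of_int_diff)
      then show ?thesis using hfun_eq[OF that] by simp
    qed
    then show ?thesis unfolding H_def by simp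
  qed
  define G where "G = floor D + 1"
  have Hge: "real_of_int G \<le> H t" if "0 \<le> t" "t < 1" for t
  proof -
    let ?g = "(\<Sum>i<n. \<bar>ceiling (y i - t) - x i\<bar>)"
    have e: "(\<Sum>i<n. \<bar>real_of_int (ceiling (y i - t)) - real_of_int (x i)\<bar>) = real_of_int ?g" by simp
    have "D < real_of_int ?g" using neg that e unfolding D_def by auto
    then have "floor D < ?g" by (simp add: floor_less_iff)
    then have "G \<le> ?g" unfolding G_def by simp
    then have "real_of_int G \<le> real_of_int ?g" by (simp only: of_int_le_iff)
    then show ?thesis using gH[OF that] e by linarith
  qed
  define H' where "H' t = (if t = 1 then real_of_int G else H t)" for t
  have H'I: "(H' has_integral D) {0..1}"
  proof (rule has_integral_spike_finite[where S = "{1}" and f = H])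
    show "finite {1::real}" by simp
    show "H' t = H t" if "t \<in> {0..1} - {1}" for t using that unfolding H'_def by simp
    show "(H has_integral D) {0..1}" by (rule HI)
  qed
  have c: "((\<lambda>t::real. real_of_int G) has_integral real_of_int G) {0..1}"
    using has_integral_const_real[of "real_of_int G" 0 1] by simp
  have le: "\<And>t. t \<in> {0..1} \<Longrightarrow> real_of_int G \<le> H' t"
  proof -
    fix t :: real assume "t \<in> {0..1}"
    then show "real_of_int G \<le> H' t" using Hge[of t] unfolding H'_def by (cases "t = 1") auto
  qed
  have "real_of_int G * 1 \<le> D" using has_integral_le[OF c H'I le] by simp
  moreover have "D < real_of_int G" unfolding G_def by linarith
  ultimately show False by simp
qed

lemma rounding:
  fixes y :: "nat \<Rightarrow> real" and x ri :: "nat \<Rightarrow> int" and L :: int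
  assumes R: "rch y (\<lambda>i. real_of_int (ri i)) n \<ge> real_of_int L"
  shows "\<exists>z :: nat \<Rightarrow> int. rch (\<lambda>i. real_of_int (z i)) (\<lambda>i. real_of_int (ri i)) n \<ge> real_of_int L \<and>
     (\<Sum>i<n. \<bar>real_of_int (z i) - real_of_int (x i)\<bar>) \<le> (\<Sum>i<n. \<bar>y i - real_of_int (x i)\<bar>)"
proof -
  obtain t where t: "0 \<le> t" "t < 1"
    "(\<Sum>i<n. \<bar>real_of_int (ceiling (y i - t)) - real_of_int (x i)\<bar>) \<le> (\<Sum>i<n. \<bar>y i - real_of_int (x i)\<bar>)"
    using good_shift by blast
  define \<phi> where "\<phi> v = real_of_int (ceiling (v - t))" for v
  have mono: "\<And>a b. a \<le> b \<Longrightarrow> \<phi> a \<le> \<phi> b" unfolding \<phi>_def by (simp add: ceiling_mono)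
  have shift: "\<And>v k. \<phi> (v + real_of_int k) = \<phi> v + real_of_int k"
  proof -
    fix v k
    have "ceiling (v + real_of_int k - t) = ceiling (v - t) + k"
      by (metis add.commute add_diff_eq ceiling_add_of_int)
    then show "\<phi> (v + real_of_int k) = \<phi> v + real_of_int k" unfolding \<phi>_def by simp
  qed
  have "ceiling (0 - t) = 0" by (rule ceiling_unique) (use t in auto)
  then have z: "\<phi> 0 = 0" unfolding \<phi>_def by simp
  have "\<phi> (rch y (\<lambda>i. real_of_int (ri i)) n) \<le> rch (\<lambda>j. \<phi> (y j)) (\<lambda>i. real_of_int (ri i)) n"
    by (rule phi_rch[OF mono shift z])
  moreover have "\<phi> (real_of_int L) \<le> \<phi> (rch y (\<lambda>i. real_of_int (ri i)) n)" using mono R by blast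
  moreover have "\<phi> (real_of_int L) = real_of_int L" using shift[of 0 L] z by simp
  ultimately have "real_of_int L \<le> rch (\<lambda>j. \<phi> (y j)) (\<lambda>i. real_of_int (ri i)) n" by simp
  then show ?thesis using t(3) unfolding \<phi>_def
    by (intro exI[of _ "\<lambda>i. ceiling (y i - t)"]) simp
qed


lemma step_mono:
  fixes p q :: real
  assumes "p \<le> q"
  shows "(if yv - rv \<le> p then max p (yv + rv) else p) \<le> (if yv - rv \<le> q then max q (yv + rv) else q)"
  using assms by auto

lemma step_le_bestv:
  fixes p z k xv rv :: int
  assumes "\<bar>z - xv\<bar> \<le> k"
  shows "(if real_of_int z - real_of_int rv \<le> real_of_int p then max (real_of_int p) (real_of_int z + real_of_int rv) else real_of_int p)
     \<le> real_of_int (bestv p k xv rv)"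
proof (cases "z - rv \<le> p")
  case True
  then have "\<not> p + rv - (xv - k) < 0" using assms by auto
  then have "bestv p k xv rv = max p (min (xv + k) (p + rv) + rv)" unfolding bestv_def by simp
  moreover have "z \<le> min (xv + k) (p + rv)" using True assms by auto
  ultimately have h: "p \<le> bestv p k xv rv" "z + rv \<le> bestv p k xv rv" by auto
  have h2: "real_of_int p \<le> real_of_int (bestv p k xv rv)" "real_of_int z + real_of_int rv \<le> real_of_int (bestv p k xv rv)"
    using h by (simp only: of_int_le_iff of_int_add[symmetric])+
  have "real_of_int z - real_of_int rv \<le> real_of_int p" using True by (simp only: of_int_le_iff of_int_diff[symmetric])
  then show ?thesis using h2 by simp
next
  case False
  then have "\<not> real_of_int z - real_of_int rv \<le> real_of_int p" by simp
  then show ?thesis using bestv_ge[of p k xv rv] by simp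
qed

lemma step_besty:
  fixes p k xv rv :: int
  assumes "0 \<le> k"
  shows "(let yv = besty p k xv rv in if real_of_int yv - real_of_int rv \<le> real_of_int p then max (real_of_int p) (real_of_int yv + real_of_int rv) else real_of_int p)
     = real_of_int (bestv p k xv rv) \<and> \<bar>besty p k xv rv - xv\<bar> \<le> k"
proof (cases "p + rv - (xv - k) < 0")
  case True
  then show ?thesis unfolding besty_def bestv_def Let_def using assms by auto
next
  case False
  then show ?thesis unfolding besty_def bestv_def Let_def using assms by (auto simp: max_def min_def)
qed

lemma tab_bound:
  fixes z x r :: "nat \<Rightarrow> int"
  shows "(\<Sum>j<i. \<bar>z j - x j\<bar>) \<le> int c \<Longrightarrow>
    rch (\<lambda>j. real_of_int (z j)) (\<lambda>j. real_of_int (r j)) i \<le> real_of_int (Tab x r i c)"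
proof (induction i arbitrary: c)
  case 0 then show ?case by simp
next
  case (Suc i)
  define k where "k = nat \<bar>z i - x i\<bar>"
  have s0: "0 \<le> (\<Sum>j<i. \<bar>z j - x j\<bar>)" by (simp add: sum_nonneg)
  have e: "(\<Sum>j<Suc i. \<bar>z j - x j\<bar>) = (\<Sum>j<i. \<bar>z j - x j\<bar>) + \<bar>z i - x i\<bar>" by simp
  have a: "\<bar>z i - x i\<bar> \<le> int c" "(\<Sum>j<i. \<bar>z j - x j\<bar>) \<le> int c - \<bar>z i - x i\<bar>" using Suc.prems s0 e by linarith+
  then have kc: "k \<le> c" unfolding k_def by simp
  have pre: "(\<Sum>j<i. \<bar>z j - x j\<bar>) \<le> int (c - k)" using a kc unfolding k_def by (simp add: of_nat_diff)
  have IH: "rch (\<lambda>j. real_of_int (z j)) (\<lambda>j. real_of_int (r j)) i \<le> real_of_int (Tab x r i (c - k))"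
    using Suc.IH[OF pre] .
  have "rch (\<lambda>j. real_of_int (z j)) (\<lambda>j. real_of_int (r j)) (Suc i) \<le>
     (if real_of_int (z i) - real_of_int (r i) \<le> real_of_int (Tab x r i (c - k))
      then max (real_of_int (Tab x r i (c - k))) (real_of_int (z i) + real_of_int (r i)) else real_of_int (Tab x r i (c - k)))"
    using step_mono[OF IH, of "real_of_int (z i)" "real_of_int (r i)"] by simp
  also have "\<dots> \<le> real_of_int (bestv (Tab x r i (c - k)) (int k) (x i) (r i))"
    by (rule step_le_bestv) (simp add: k_def)
  also have "\<dots> \<le> real_of_int (Tab x r (Suc i) c)" using Tab_ge[OF kc] by simp
  finally show ?case .
qed

lemma rch_cong: "(\<And>j. j < i \<Longrightarrow> y j = y' j) \<Longrightarrow> rch y r i = rch y' r i"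
  by (induction i) auto

context inst begin

lemma ccol_Suc: "i < n \<Longrightarrow> ccol cs (Suc i) = ccol cs i + Ktab x r (Suc i) (ccol cs (Suc i))
   \<and> ccol cs i = ccol cs (Suc i) - Ktab x r (Suc i) (ccol cs (Suc i))"
proof -
  assume i: "i < n"
  have a: "ccol cs i = ccol cs (Suc i) - Ktab x r (Suc i) (ccol cs (Suc i))"
    using ccol_step[of "Suc i" cs] i by simp
  have b: "Ktab x r (Suc i) (ccol cs (Suc i)) \<le> ccol cs (Suc i)" using Ktab_le[of "Suc i"] by simp
  show ?thesis using a b by auto
qed

lemma yout_props: "i \<le> n \<Longrightarrow>
   real_of_int (Tab x r i (ccol cs i)) \<le> rch (\<lambda>j. real_of_int (yout cs j)) (\<lambda>j. real_of_int (r j)) i \<and>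
   (\<Sum>j<i. \<bar>yout cs j - x j\<bar>) \<le> int (ccol cs i)"
proof (induction i)
  case 0 then show ?case by simp
next
  case (Suc i)
  then have i: "i < n" by simp
  define c where "c = ccol cs (Suc i)"
  define K where "K = Ktab x r (Suc i) c"
  have cc: "ccol cs (Suc i) = ccol cs i + K" "ccol cs i = c - K" using ccol_Suc[OF i] Ktab_le[of "Suc i" "ccol cs (Suc i)"] unfolding c_def K_def by auto
  have yv: "yout cs i = besty (Tab x r i (ccol cs i)) (int K) (x i) (r i)"
    unfolding yout_def K_def c_def by simp
  have sb: "(let yv = besty (Tab x r i (ccol cs i)) (int K) (x i) (r i) in if real_of_int yv - real_of_int (r i) \<le> real_of_int (Tab x r i (ccol cs i))
      then max (real_of_int (Tab x r i (ccol cs i))) (real_of_int yv + real_of_int (r i)) else real_of_int (Tab x r i (ccol cs i)))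
     = real_of_int (bestv (Tab x r i (ccol cs i)) (int K) (x i) (r i)) \<and>
     \<bar>besty (Tab x r i (ccol cs i)) (int K) (x i) (r i) - x i\<bar> \<le> int K"
    by (rule step_besty) simp
  have tb: "bestv (Tab x r i (ccol cs i)) (int K) (x i) (r i) = Tab x r (Suc i) c"
    using Ktab_props[of x r i c] unfolding K_def[symmetric] cc(2) by simp
  define tv where "tv = Tab x r (Suc i) c"
  define pp where "pp = Tab x r i (ccol cs i)"
  define yy where "yy = besty pp (int K) (x i) (r i)"
  have tb': "bestv pp (int K) (x i) (r i) = tv" using tb unfolding tv_def pp_def .
  have IH: "real_of_int pp \<le> rch (\<lambda>j. real_of_int (yout cs j)) (\<lambda>j. real_of_int (r j)) i"
    "(\<Sum>j<i. \<bar>yout cs j - x j\<bar>) \<le> int (ccol cs i)" using Suc.IH i unfolding pp_def by auto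
  have yv': "yout cs i = yy" using yv unfolding yy_def pp_def .
  have sb': "(if real_of_int yy - real_of_int (r i) \<le> real_of_int pp
      then max (real_of_int pp) (real_of_int yy + real_of_int (r i)) else real_of_int pp) = real_of_int tv"
     "\<bar>yy - x i\<bar> \<le> int K"
    using sb tb' unfolding yy_def[symmetric] pp_def[symmetric] Let_def by auto
  have "real_of_int tv \<le> (if real_of_int yy - real_of_int (r i) \<le> rch (\<lambda>j. real_of_int (yout cs j)) (\<lambda>j. real_of_int (r j)) i
      then max (rch (\<lambda>j. real_of_int (yout cs j)) (\<lambda>j. real_of_int (r j)) i) (real_of_int yy + real_of_int (r i))
      else rch (\<lambda>j. real_of_int (yout cs j)) (\<lambda>j. real_of_int (r j)) i)"
    using step_mono[OF IH(1), of "real_of_int yy" "real_of_int (r i)"] sb'(1) by simp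
  also have "\<dots> = rch (\<lambda>j. real_of_int (yout cs j)) (\<lambda>j. real_of_int (r j)) (Suc i)" using yv' by simp
  finally have "real_of_int (Tab x r (Suc i) c) \<le> rch (\<lambda>j. real_of_int (yout cs j)) (\<lambda>j. real_of_int (r j)) (Suc i)"
    unfolding tv_def .
  moreover have "(\<Sum>j<Suc i. \<bar>yout cs j - x j\<bar>) \<le> int (ccol cs (Suc i))"
    using IH(2) sb'(2) yv' cc(1) by simp
  ultimately show ?case unfolding c_def by blast
qed

end


lemma lb:
  fixes x r :: "nat \<Rightarrow> int" and L :: int and y :: "nat \<Rightarrow> real"
  assumes L: "L > 0" and op: "order_preserving n (real_of_int L) (\<lambda>i. real_of_int (r i)) y"
  shows "\<exists>c. L \<le> Tab x r n c \<and> real c \<le> cost n (\<lambda>i. real_of_int (x i)) y"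
proof -
  have R: "rch y (\<lambda>i. real_of_int (r i)) n \<ge> real_of_int L" using op_to_rch[OF _ op] L by simp
  obtain z :: "nat \<Rightarrow> int" where z: "rch (\<lambda>i. real_of_int (z i)) (\<lambda>i. real_of_int (r i)) n \<ge> real_of_int L"
    "(\<Sum>i<n. \<bar>real_of_int (z i) - real_of_int (x i)\<bar>) \<le> (\<Sum>i<n. \<bar>y i - real_of_int (x i)\<bar>)"
    using rounding[OF R, of x] by blast
  define ci where "ci = (\<Sum>i<n. \<bar>z i - x i\<bar>)"
  have ci0: "0 \<le> ci" unfolding ci_def by (simp add: sum_nonneg)
  define c where "c = nat ci"
  have "rch (\<lambda>i. real_of_int (z i)) (\<lambda>i. real_of_int (r i)) n \<le> real_of_int (Tab x r n c)"
    by (rule tab_bound) (simp add: c_def ci_def[symmetric] ci0)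
  then have "L \<le> Tab x r n c" using z(1) by simp
  moreover have "real c = (\<Sum>i<n. \<bar>real_of_int (z i) - real_of_int (x i)\<bar>)"
    unfolding c_def ci_def using ci0 unfolding ci_def by simp
  ultimately show ?thesis using z(2) unfolding cost_def by (intro exI[of _ c]) simp
qed

lemma time_bound:
  fixes n cs :: nat
  assumes n1: "1 \<le> n"
  shows "7 + ((cs + 1) * (n * (25 * cs + 43) + 11) + (2 + (n * (25 + 4 * cs) + 1))) \<le> 200 * (cs^2 + 1) * n"
proof -
  have e: "7 + ((cs + 1) * (n * (25 * cs + 43) + 11) + (2 + (n * (25 + 4 * cs) + 1))) = n * (25 * cs * cs + 72 * cs + 68) + (11 * cs + 21)"
    by (simp add: algebra_simps)
  have a: "11 * cs + 21 \<le> n * (11 * cs + 21)" using n1 by simp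
  have b: "cs \<le> cs * cs" by (cases cs) auto
  have "n * (25 * cs * cs + 72 * cs + 68) + (11 * cs + 21) \<le> n * (25 * cs * cs + 72 * cs + 68) + n * (11 * cs + 21)"
    using a by simp
  also have "\<dots> = n * (25 * cs * cs + 83 * cs + 89)" by (simp add: algebra_simps)
  also have "\<dots> \<le> n * (200 * (cs * cs + 1))"
  proof (intro mult_le_mono2)
    have "83 * cs \<le> 83 * (cs * cs)" using b by simp
    moreover have "200 * (cs * cs + 1) = 200 * (cs * cs) + 200" by simp
    ultimately have "25 * (cs * cs) + 83 * cs + 89 \<le> 200 * (cs * cs + 1)" by linarith
    then show "25 * cs * cs + 83 * cs + 89 \<le> 200 * (cs * cs + 1)" by (simp add: mult.assoc)
  qed
  finally show ?thesis using e by (simp add: power2_eq_square algebra_simps)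
qed


lemma halted90: "halted prog (90, M)" unfolding halted_def by simp

theorem mainTheorem7:
  shows "\<exists>(P :: instr list) (C :: real). \<forall>(n :: nat) (L :: int) (x :: nat \<Rightarrow> int) (r :: nat \<Rightarrow> int).
     L > 0 \<longrightarrow>
     (\<forall>i<n. r i > 0) \<longrightarrow>
     (\<forall>i j. i \<le> j \<longrightarrow> j < n \<longrightarrow> x i \<le> x j) \<longrightarrow>
     (\<exists>y. feasible n (real_of_int L) (\<lambda>i. real_of_int (r i)) y \<and>
          order_preserving n (real_of_int L) (\<lambda>i. real_of_int (r i)) y) \<longrightarrow>
     (\<exists>t pc M'. halts_in P (0, input_mem n L x r) t (pc, M') \<and>
        (let opt = opt_op n (real_of_int L) (\<lambda>i. real_of_int (x i)) (\<lambda>i. real_of_int (r i));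
             y = output_sol n M'
         in feasible n (real_of_int L) (\<lambda>i. real_of_int (r i)) y \<and>
            order_preserving n (real_of_int L) (\<lambda>i. real_of_int (r i)) y \<and>
            cost n (\<lambda>i. real_of_int (x i)) y = opt \<and>
            real t \<le> C * (opt\<^sup>2 + 1) * real n))"
proof (intro exI[of _ prog] exI[of _ "200::real"] allI impI)
  fix n :: nat and L :: int and x r :: "nat \<Rightarrow> int"
  assume L: "L > 0" and rpos: "\<forall>i<n. r i > 0" and srt: "\<forall>i j. i \<le> j \<longrightarrow> j < n \<longrightarrow> x i \<le> x j"
    and ex: "\<exists>y. feasible n (real_of_int L) (\<lambda>i. real_of_int (r i)) y \<and>
          order_preserving n (real_of_int L) (\<lambda>i. real_of_int (r i)) y"
  interpret I: inst n L x r .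
  let ?r = "\<lambda>i. real_of_int (r i)" and ?x = "\<lambda>i. real_of_int (x i)"
  obtain y0 where y0: "feasible n (real_of_int L) ?r y0" "order_preserving n (real_of_int L) ?r y0" using ex by blast
  have n1: "1 \<le> n"
  proof (rule ccontr)
    assume "\<not> 1 \<le> n"
    then have "n = 0" by simp
    then have "{0..real_of_int L} \<subseteq> {}" using y0(1) unfolding feasible_def active_def by simp
    then show False using L by simp
  qed
  obtain c0 where c0: "L \<le> Tab x r n c0" using lb[OF L y0(2), of x] by blast
  define cs where "cs = (LEAST c. L \<le> Tab x r n c)"
  have csL: "L \<le> Tab x r n cs" unfolding cs_def by (rule LeastI[of _ c0]) (rule c0)
  have below: "\<forall>c'<cs. Tab x r n c' < L" unfolding cs_def using not_less_Least by fastforce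
  have lower: "real cs \<le> cost n ?x y'" if opy: "order_preserving n (real_of_int L) ?r y'" for y'
  proof -
    obtain c where c: "L \<le> Tab x r n c" "real c \<le> cost n ?x y'" using lb[OF L opy, of x] by blast
    have "cs \<le> c" unfolding cs_def using c(1) by (rule Least_le)
    then show ?thesis using c(2) by simp
  qed
  define B where "B = 7 + ((cs + 1) * I.colb cs + (2 + (n * (25 + 4 * cs) + 1)))"
  have W: "wpp 90 (\<lambda>M'. I.outok M' cs 0) (0, input_mem n L x r) B"
    unfolding B_def by (rule I.whole[OF below csL])
  then obtain t where t: "t \<le> B" "fst ((step prog ^^ t) (0, input_mem n L x r)) = 90"
      "I.outok (snd ((step prog ^^ t) (0, input_mem n L x r))) cs 0"
    unfolding wpp_def by blast
  define M' where "M' = snd ((step prog ^^ t) (0, input_mem n L x r))"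
  have st: "(step prog ^^ t) (0, input_mem n L x r) = (90, M')" using t(2) unfolding M'_def by (simp add: prod_eq_iff)
  have halts: "halts_in prog (0, input_mem n L x r) t (90, M')"
    unfolding halts_in_def using st halted90 by simp
  define y where "y = output_sol n M'"
  have yv: "y i = real_of_int (I.yout cs i)" if "i < n" for i
    using t(3) that unfolding M'_def[symmetric] I.outok_def y_def output_sol_def I.N_def by simp
  have ycong: "rch y ?r n = rch (\<lambda>j. real_of_int (I.yout cs j)) ?r n"
    by (rule rch_cong) (simp add: yv)
  have YP: "real_of_int (Tab x r n (I.ccol cs n)) \<le> rch (\<lambda>j. real_of_int (I.yout cs j)) ?r n \<and>
      (\<Sum>j<n. \<bar>I.yout cs j - x j\<bar>) \<le> int (I.ccol cs n)" by (rule I.yout_props) simp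
  have rchL: "real_of_int L \<le> rch y ?r n" using YP csL ycong I.ccol_n by simp
  have op: "order_preserving n (real_of_int L) ?r y" by (rule rch_to_op) (use L rchL in auto)
  have fe: "feasible n (real_of_int L) ?r y" by (rule op_feasible[OF op])
  have cy: "cost n ?x y = real_of_int (\<Sum>j<n. \<bar>I.yout cs j - x j\<bar>)"
    unfolding cost_def using yv by (simp add: of_int_sum)
  have s: "(\<Sum>j<n. \<bar>I.yout cs j - x j\<bar>) \<le> int cs" using YP I.ccol_n by simp
  then have "real_of_int (\<Sum>j<n. \<bar>I.yout cs j - x j\<bar>) \<le> real_of_int (int cs)" by (simp only: of_int_le_iff)
  then have cle: "cost n ?x y \<le> real cs" using cy by simp
  have ceq: "cost n ?x y = real cs" using cle lower[OF op] by simp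
  have opt: "opt_op n (real_of_int L) ?x ?r = real cs"
    unfolding opt_op_def
  proof (rule cInf_eq_minimum)
    show "real cs \<in> {cost n ?x y |y. feasible n (real_of_int L) ?r y \<and> order_preserving n (real_of_int L) ?r y}"
      using fe op ceq by (intro CollectI exI[of _ y]) simp
    fix z assume "z \<in> {cost n ?x y |y. feasible n (real_of_int L) ?r y \<and> order_preserving n (real_of_int L) ?r y}"
    then show "real cs \<le> z" using lower by blast
  qed
  have tb: "B \<le> 200 * (cs^2 + 1) * n" unfolding B_def I.colb_def by (rule time_bound[OF n1])
  then have "real t \<le> real (200 * (cs^2 + 1) * n)" using t(1) by linarith
  moreover have eq: "real (200 * (cs^2 + 1) * n) = 200 * ((real cs)\<^sup>2 + 1) * real n" by (simp add: algebra_simps)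
  ultimately have tr: "real t \<le> 200 * ((real cs)\<^sup>2 + 1) * real n" by (simp only:)
  show "\<exists>t pc M'. halts_in prog (0, input_mem n L x r) t (pc, M') \<and>
        (let opt = opt_op n (real_of_int L) ?x ?r; y = output_sol n M'
         in feasible n (real_of_int L) ?r y \<and> order_preserving n (real_of_int L) ?r y \<and>
            cost n ?x y = opt \<and> real t \<le> 200 * (opt\<^sup>2 + 1) * real n)"
    apply (rule exI[of _ t], rule exI[of _ 90], rule exI[of _ M'])
    using halts fe op ceq opt tr unfolding y_def Let_def by (simp add: algebra_simps)
qed


end
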